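(* Let $\boldsymbol{\Sigma}$ be a given $n\times n$ positive definite covariance matrix, and consider its multi-resolution decomposition (defined in the context) with $M$ resolutions and the same number $r_m=r$ of knots per region at every resolution $m=0,\dots,M$, so that $N=(M+1)r$. Then $\mathbf{B}=\mathrm{mrd}(\boldsymbol{\Sigma})$ can be computed in $\mathcal{O}(nN^2)$ time using the recursion defining the MRD.
   Context: Setting for the MRD. Grid indices $\mathcal{I}=\{1,\dots,n\}$ are recursively partitioned: for $m=0,\dots,M-1$ and $(j_1,\dots,j_m)\in\{1,\dots,J\}^m$, $\mathcal{I}_{j_1,\dots,j_m}$ (with $\mathcal{I}_{\emptyset}=\mathcal{I}$) is the disjoint union of $\mathcal{I}_{j_1,\dots,j_m,j_{m+1}}$, $j_{m+1}=1,\dots,J$; indices are ordered so finest sets $\mathcal{I}_{j_1,\dots,j_M}$ are contiguous in lexicographic order. Knot sets $\mathcal{K}_{j_1,\dots,j_m}\subset\mathcal{I}_{j_1,\dots,j_m}\setminus\mathcal{K}^{0:m-1}$, $|\mathcal{K}_{j_1,\dots,j_m}|=r_m$, chosen sequentially for $m=0,\dots,M$ (with $\mathcal{K}^m=\bigcup\mathcal{K}_{j_1,\dots,j_m}$, $\mathcal{K}^{0:m}=\bigcup_{l\le m}\mathcal{K}^l$) so that all knot sets partition $\mathcal{I}$. The MRD algorithm: for $m=0,\dots,M$, each $(j_1,\dots,j_m)$ and $\ell=0,\dots,m$, compute $\mathbf{W}^\ell_{j_1,\dots,j_m}=\boldsymbol{\Sigma}[\mathcal{I}_{j_1,\dots,j_m},\mathcal{K}_{j_1,\dots,j_\ell}]-\sum_{k=0}^{\ell-1}\mathbf{W}^k_{j_1,\dots,j_m}(\mathbf{V}^k_{j_1,\dots,j_k})^{-1}(\mathbf{V}^k_{j_1,\dots,j_\ell})'$,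 $\mathbf{V}^\ell_{j_1,\dots,j_m}=\boldsymbol{\Sigma}[\mathcal{K}_{j_1,\dots,j_m},\mathcal{K}_{j_1,\dots,j_\ell}]-\sum_{k=0}^{\ell-1}\mathbf{V}^k_{j_1,\dots,j_m}(\mathbf{V}^k_{j_1,\dots,j_k})^{-1}(\mathbf{V}^k_{j_1,\dots,j_\ell})'$, then set $\mathbf{B}_{j_1,\dots,j_m}=\mathbf{W}^m_{j_1,\dots,j_m}(\mathbf{V}^m_{j_1,\dots,j_m})^{-1/2}$; output $\mathbf{B}=(\mathbf{B}^M,\dots,\mathbf{B}^0)$ with $\mathbf{B}^m=\mathrm{blockdiag}(\{\mathbf{B}_{j_1,\dots,j_m}\})$ in lexicographic order. *)

theory Defs
  imports Complex_Main
begin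

definition posdef :: "nat \<Rightarrow> (nat \<Rightarrow> nat \<Rightarrow> real) \<Rightarrow> bool" where
  "posdef n S \<longleftrightarrow> (\<forall>i<n. \<forall>j<n. S i j = S j i) \<and>
     (\<forall>x::nat \<Rightarrow> real. (\<exists>i<n. x i \<noteq> 0) \<longrightarrow> (\<Sum>i<n. \<Sum>j<n. x i * S i j * x j) > 0)"

definition mat_inv :: "nat \<Rightarrow> (nat \<Rightarrow> nat \<Rightarrow> real) \<Rightarrow> (nat \<Rightarrow> nat \<Rightarrow> real)" where
  "mat_inv r A = (SOME X. \<forall>i<r. \<forall>j<r. (\<Sum>k<r. A i k * X k j) = (if i = j then 1 else 0))"

definition chol :: "nat \<Rightarrow> (nat \<Rightarrow> nat \<Rightarrow> real) \<Rightarrow> (nat \<Rightarrow> nat \<Rightarrow> real)" where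
  "chol r A = (SOME L. (\<forall>i<r. \<forall>j<r. i < j \<longrightarrow> L i j = 0) \<and> (\<forall>i<r. L i i > 0) \<and>
                      (\<forall>i<r. \<forall>j<r. (\<Sum>k<r. L i k * L j k) = A i j))"

(* A^{-1/2} := (L')^{-1} where A = L L' (so that A^{-1/2} (A^{-1/2})' = A^{-1}) *)
definition mat_inv_sqrt :: "nat \<Rightarrow> (nat \<Rightarrow> nat \<Rightarrow> real) \<Rightarrow> (nat \<Rightarrow> nat \<Rightarrow> real)" where
  "mat_inv_sqrt r A = (\<lambda>a b. mat_inv r (chol r A) b a)"

definition tuples :: "nat \<Rightarrow> nat \<Rightarrow> nat list set" where
  "tuples J m = {js. length js = m \<and> set js \<subseteq> {1..J}}"

(* I :: region of a tuple, K :: knot set of a tuple; r_m = r for all m *)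
definition mrd_structure ::
  "nat \<Rightarrow> nat \<Rightarrow> nat \<Rightarrow> nat \<Rightarrow> (nat list \<Rightarrow> nat set) \<Rightarrow> (nat list \<Rightarrow> nat set) \<Rightarrow> bool" where
  "mrd_structure n J M r I K \<longleftrightarrow>
     0 < J \<and>
     I [] = {0..<n} \<and>
     (\<forall>m<M. \<forall>js\<in>tuples J m.
        I js = (\<Union>j\<in>{1..J}. I (js @ [j])) \<and>
        (\<forall>j\<in>{1..J}. \<forall>j'\<in>{1..J}. j \<noteq> j' \<longrightarrow> I (js @ [j]) \<inter> I (js @ [j']) = {})) \<and>
     (\<forall>js\<in>tuples J M. \<forall>js'\<in>tuples J M. (js, js') \<in> lexord {(a, b). a < b} \<longrightarrow>
        (\<forall>i\<in>I js. \<forall>i'\<in>I js'. i < i')) \<and>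
     (\<forall>m\<le>M. \<forall>js\<in>tuples J m.
        K js \<subseteq> I js - (\<Union>l<m. K (take l js)) \<and> card (K js) = r) \<and>
     (\<Union>m\<le>M. \<Union>js\<in>tuples J m. K js) = {0..<n} \<and>
     (\<forall>m\<le>M. \<forall>m'\<le>M. \<forall>js\<in>tuples J m. \<forall>js'\<in>tuples J m'. js \<noteq> js' \<longrightarrow> K js \<inter> K js' = {})"

definition knot :: "(nat list \<Rightarrow> nat set) \<Rightarrow> nat list \<Rightarrow> nat \<Rightarrow> nat" where
  "knot K js t = sorted_list_of_set (K js) ! t"

(* V^l_{js}[s,t] : rows = knots of K_js, columns = knots of K_{take l js} *)
function mrd_V :: "(nat \<Rightarrow> nat \<Rightarrow> real) \<Rightarrow> (nat list \<Rightarrow> nat set) \<Rightarrow> nat \<Rightarrow> nat \<Rightarrow> nat list \<Rightarrow> nat \<Rightarrow> nat \<Rightarrow> real" where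
  "mrd_V S K r l js s t =
     S (knot K js s) (knot K (take l js) t) -
     (\<Sum>k<l. \<Sum>a<r. \<Sum>b<r. mrd_V S K r k js s a *
         mat_inv r (\<lambda>x y. mrd_V S K r k (take k js) x y) a b * mrd_V S K r k (take l js) t b)"
  by pat_completeness auto
termination by (relation "measure (\<lambda>(S, K, r, l, js, s, t). l)") auto

declare mrd_V.simps [simp del]

(* W^l_{js}[i,t] : row = grid index i (in I_js), column = t-th knot of K_{take l js} *)
function mrd_W :: "(nat \<Rightarrow> nat \<Rightarrow> real) \<Rightarrow> (nat list \<Rightarrow> nat set) \<Rightarrow> nat \<Rightarrow> nat \<Rightarrow> nat list \<Rightarrow> nat \<Rightarrow> nat \<Rightarrow> real" where
  "mrd_W S K r l js i t =
     S i (knot K (take l js) t) -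
     (\<Sum>k<l. \<Sum>a<r. \<Sum>b<r. mrd_W S K r k js i a *
         mat_inv r (\<lambda>x y. mrd_V S K r k (take k js) x y) a b * mrd_V S K r k (take l js) t b)"
  by pat_completeness auto
termination by (relation "measure (\<lambda>(S, K, r, l, js, i, t). l)") auto

declare mrd_W.simps [simp del]

definition mrd_B :: "(nat \<Rightarrow> nat \<Rightarrow> real) \<Rightarrow> (nat list \<Rightarrow> nat set) \<Rightarrow> nat \<Rightarrow> nat list \<Rightarrow> nat \<Rightarrow> nat \<Rightarrow> real" where
  "mrd_B S K r js i t =
     (\<Sum>a<r. mrd_W S K r (length js) js i a *
        mat_inv_sqrt r (\<lambda>x y. mrd_V S K r (length js) js x y) a t)"

(* ---------- cost model: straight-line programs over the reals (algebraic/BSS model) ---------- *)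

datatype instr =
    Const real | Inp nat nat | Add nat nat | Sub nat nat | Mul nat nat | Dvd nat nat | Sqrt nat

fun step :: "(nat \<Rightarrow> nat \<Rightarrow> real) \<Rightarrow> real list \<Rightarrow> instr \<Rightarrow> real" where
  "step S vs (Const c) = c"
| "step S vs (Inp i j) = S i j"
| "step S vs (Add a b) = vs ! a + vs ! b"
| "step S vs (Sub a b) = vs ! a - vs ! b"
| "step S vs (Mul a b) = vs ! a * vs ! b"
| "step S vs (Dvd a b) = vs ! a / vs ! b"
| "step S vs (Sqrt a) = sqrt (vs ! a)"

definition eval_prog :: "instr list \<Rightarrow> (nat \<Rightarrow> nat \<Rightarrow> real) \<Rightarrow> real list" where
  "eval_prog P S = foldl (\<lambda>vs ins. vs @ [step S vs ins]) [] P"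

fun instr_ok :: "real list \<Rightarrow> instr \<Rightarrow> bool" where
  "instr_ok vs (Const c) = True"
| "instr_ok vs (Inp i j) = True"
| "instr_ok vs (Add a b) = (a < length vs \<and> b < length vs)"
| "instr_ok vs (Sub a b) = (a < length vs \<and> b < length vs)"
| "instr_ok vs (Mul a b) = (a < length vs \<and> b < length vs)"
| "instr_ok vs (Dvd a b) = (a < length vs \<and> b < length vs \<and> vs ! b \<noteq> 0)"
| "instr_ok vs (Sqrt a) = (a < length vs \<and> vs ! a \<ge> 0)"

definition prog_ok :: "instr list \<Rightarrow> (nat \<Rightarrow> nat \<Rightarrow> real) \<Rightarrow> bool" where
  "prog_ok P S \<longleftrightarrow> (\<forall>p<length P. instr_ok (eval_prog (take p P) S) (P ! p))"

end

theory Submission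
  imports Defs
begin

datatype bop = BAdd | BSub | BMul | BDiv

datatype 'k ex = EConst real | EInp nat nat | ERef 'k | EBin bop "'k ex" "'k ex" | ESqrt "'k ex"

fun mkI :: "bop \<Rightarrow> nat \<Rightarrow> nat \<Rightarrow> instr" where
  "mkI BAdd a b = Add a b" | "mkI BSub a b = Sub a b" | "mkI BMul a b = Mul a b" | "mkI BDiv a b = Dvd a b"

fun bopv :: "bop \<Rightarrow> real \<Rightarrow> real \<Rightarrow> real" where
  "bopv BAdd x y = x + y" | "bopv BSub x y = x - y" | "bopv BMul x y = x * y" | "bopv BDiv x y = x / y"

fun comp :: "('k \<Rightarrow> nat) \<Rightarrow> nat \<Rightarrow> 'k ex \<Rightarrow> instr list \<times> nat" where
  "comp loc b (EConst c) = ([Const c], b)"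
| "comp loc b (EInp i j) = ([Inp i j], b)"
| "comp loc b (ERef k) = ([], loc k)"
| "comp loc b (EBin op e1 e2) = (let (c1, r1) = comp loc b e1; (c2, r2) = comp loc (b + length c1) e2
      in (c1 @ c2 @ [mkI op r1 r2], b + length c1 + length c2))"
| "comp loc b (ESqrt e) = (let (c1, r1) = comp loc b e in (c1 @ [Sqrt r1], b + length c1))"

fun ncode :: "'k ex \<Rightarrow> nat" where
  "ncode (EConst c) = 1" | "ncode (EInp i j) = 1" | "ncode (ERef k) = 0"
| "ncode (EBin op e1 e2) = Suc (ncode e1 + ncode e2)" | "ncode (ESqrt e) = Suc (ncode e)"

fun evx :: "('k \<Rightarrow> real) \<Rightarrow> (nat \<Rightarrow> nat \<Rightarrow> real) \<Rightarrow> 'k ex \<Rightarrow> real" where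
  "evx v S (EConst c) = c" | "evx v S (EInp i j) = S i j" | "evx v S (ERef k) = v k"
| "evx v S (EBin op e1 e2) = bopv op (evx v S e1) (evx v S e2)" | "evx v S (ESqrt e) = sqrt (evx v S e)"

fun dfd :: "('k \<Rightarrow> real) \<Rightarrow> (nat \<Rightarrow> nat \<Rightarrow> real) \<Rightarrow> 'k ex \<Rightarrow> bool" where
  "dfd v S (EConst c) = True" | "dfd v S (EInp i j) = True" | "dfd v S (ERef k) = True"
| "dfd v S (EBin op e1 e2) = (dfd v S e1 \<and> dfd v S e2 \<and> (op = BDiv \<longrightarrow> evx v S e2 \<noteq> 0))"
| "dfd v S (ESqrt e) = (dfd v S e \<and> evx v S e \<ge> 0)"

fun refs :: "'k ex \<Rightarrow> 'k set" where
  "refs (EConst c) = {}" | "refs (EInp i j) = {}" | "refs (ERef k) = {k}"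
| "refs (EBin op e1 e2) = refs e1 \<union> refs e2" | "refs (ESqrt e) = refs e"

lemma length_comp: "length (fst (comp loc b e)) = ncode e"
  by (induction e arbitrary: b) (auto simp: split_beta Let_def)

lemma length_eval_prog: "length (eval_prog P S) = length P"
  by (induction P rule: rev_induct) (auto simp: eval_prog_def)

lemma eval_prog_snoc: "eval_prog (P @ [x]) S = eval_prog P S @ [step S (eval_prog P S) x]"
  by (simp add: eval_prog_def)

lemma eval_prog_append: "\<exists>ys. eval_prog (P @ Q) S = eval_prog P S @ ys"
proof (induction Q rule: rev_induct)
  case Nil then show ?case by simp
next
  case (snoc x xs)
  then obtain ys where "eval_prog (P @ xs) S = eval_prog P S @ ys" by blast
  then show ?case by (simp add: eval_prog_snoc[of "P @ xs", simplified])
qed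

lemma eval_prog_append_nth: "i < length P \<Longrightarrow> eval_prog (P @ Q) S ! i = eval_prog P S ! i"
  using eval_prog_append[of P Q S] by (auto simp: nth_append length_eval_prog)

lemma prog_ok_snoc: "prog_ok (P @ [x]) S \<longleftrightarrow> prog_ok P S \<and> instr_ok (eval_prog P S) x"
  unfolding prog_ok_def
  by (auto simp: nth_append less_Suc_eq)

lemma prog_ok_Nil: "prog_ok [] S" by (simp add: prog_ok_def)

lemma comp_correct:
  assumes "length P = b" "prog_ok P S"
    "\<forall>k\<in>refs e. loc k < b \<and> eval_prog P S ! loc k = v k" "dfd v S e"
  shows "prog_ok (P @ fst (comp loc b e)) S \<and> snd (comp loc b e) < b + length (fst (comp loc b e)) \<and>
         eval_prog (P @ fst (comp loc b e)) S ! snd (comp loc b e) = evx v S e"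
  using assms
proof (induction e arbitrary: P b)
  case (EConst c)
  then show ?case by (simp add: prog_ok_snoc eval_prog_snoc nth_append length_eval_prog)
next
  case (EInp i j)
  then show ?case by (simp add: prog_ok_snoc eval_prog_snoc nth_append length_eval_prog)
next
  case (ERef k)
  then show ?case by simp
next
  case (EBin op e1 e2)
  obtain c1 r1 where h1: "comp loc b e1 = (c1, r1)" by fastforce
  obtain c2 r2 where h2: "comp loc (b + length c1) e2 = (c2, r2)" by fastforce
  have IH1: "prog_ok (P @ c1) S \<and> r1 < b + length c1 \<and> eval_prog (P @ c1) S ! r1 = evx v S e1"
    using EBin.IH(1)[of P b] EBin.prems h1 by auto
  have IH2: "prog_ok (P @ c1 @ c2) S \<and> r2 < b + length c1 + length c2 \<and>
      eval_prog (P @ c1 @ c2) S ! r2 = evx v S e2"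
  proof -
    have "\<forall>k\<in>refs e2. loc k < b + length c1 \<and> eval_prog (P @ c1) S ! loc k = v k"
    proof
      fix k assume "k \<in> refs e2"
      then have "loc k < b \<and> eval_prog P S ! loc k = v k" using EBin.prems(3) by auto
      then show "loc k < b + length c1 \<and> eval_prog (P @ c1) S ! loc k = v k"
        using EBin.prems(1) by (auto simp: eval_prog_append_nth)
    qed
    then show ?thesis
      using EBin.IH(2)[of "P @ c1" "b + length c1"] EBin.prems h2 IH1 by auto
  qed
  have r1': "eval_prog (P @ c1 @ c2) S ! r1 = evx v S e1"
    using IH1 eval_prog_append_nth[of r1 "P @ c1" c2 S] EBin.prems(1) by auto
  have len: "length (eval_prog (P @ c1 @ c2) S) = b + length c1 + length c2"
    using EBin.prems(1) by (simp add: length_eval_prog)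
  have ok: "instr_ok (eval_prog (P @ c1 @ c2) S) (mkI op r1 r2)"
    using IH1 IH2 r1' len EBin.prems(4) by (cases op) auto
  have ev: "step S (eval_prog (P @ c1 @ c2) S) (mkI op r1 r2) = bopv op (evx v S e1) (evx v S e2)"
    using IH2 r1' by (cases op) auto
  show ?case
    using h1 h2 IH2 ok ev len EBin.prems(1)
    using prog_ok_snoc[of "P @ c1 @ c2" "mkI op r1 r2" S]
    using eval_prog_snoc[of "P @ c1 @ c2" "mkI op r1 r2" S]
    by (simp add: nth_append)
next
  case (ESqrt e)
  obtain c1 r1 where h1: "comp loc b e = (c1, r1)" by fastforce
  have IH1: "prog_ok (P @ c1) S \<and> r1 < b + length c1 \<and> eval_prog (P @ c1) S ! r1 = evx v S e"
    using ESqrt.IH[of P b] ESqrt.prems h1 by auto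
  have len: "length (eval_prog (P @ c1) S) = b + length c1"
    using ESqrt.prems(1) by (simp add: length_eval_prog)
  show ?case
    using h1 IH1 len ESqrt.prems
    using prog_ok_snoc[of "P @ c1" "Sqrt r1" S]
    using eval_prog_snoc[of "P @ c1" "Sqrt r1" S]
    by (simp add: nth_append)
qed

definition emit :: "('k \<Rightarrow> 'k ex) \<Rightarrow> instr list \<times> ('k \<Rightarrow> nat) \<Rightarrow> 'k \<Rightarrow> instr list \<times> ('k \<Rightarrow> nat)" where
  "emit ex st k = (let (P, loc) = st; (c, res) = comp loc (length P) (ex k) in (P @ c, loc(k := res)))"

definition Inv :: "('k \<Rightarrow> real) \<Rightarrow> (nat \<Rightarrow> nat \<Rightarrow> real) \<Rightarrow> 'k set \<Rightarrow> instr list \<times> ('k \<Rightarrow> nat) \<Rightarrow> bool" where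
  "Inv v S D st \<longleftrightarrow> prog_ok (fst st) S \<and> (\<forall>k\<in>D. snd st k < length (fst st) \<and> eval_prog (fst st) S ! snd st k = v k)"

lemma emit_Inv:
  assumes "Inv v S D st" "refs (ex k) \<subseteq> D" "dfd v S (ex k)" "evx v S (ex k) = v k"
  shows "Inv v S (insert k D) (emit ex st k)"
proof -
  obtain P loc where st: "st = (P, loc)" by fastforce
  obtain c res where h: "comp loc (length P) (ex k) = (c, res)" by fastforce
  have C: "prog_ok (P @ c) S \<and> res < length P + length c \<and> eval_prog (P @ c) S ! res = v k"
    using comp_correct[of P "length P" S "ex k" loc v] assms h st unfolding Inv_def by auto
  show ?thesis
    using C assms(1) st h unfolding Inv_def emit_def
    by (auto simp: eval_prog_append_nth)
qed

lemma fold_Inv: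
  assumes "Inv v S D st" "\<forall>k\<in>set ks. refs (ex k) \<subseteq> D \<and> dfd v S (ex k) \<and> evx v S (ex k) = v k"
  shows "Inv v S (D \<union> set ks) (foldl (emit ex) st ks)"
  using assms
proof (induction ks arbitrary: st D)
  case Nil then show ?case by simp
next
  case (Cons k ks)
  have "Inv v S (insert k D) (emit ex st k)" using Cons.prems emit_Inv by fastforce
  moreover have "\<forall>k'\<in>set ks. refs (ex k') \<subseteq> insert k D \<and> dfd v S (ex k') \<and> evx v S (ex k') = v k'"
    using Cons.prems(2) by auto
  ultimately have "Inv v S (insert k D \<union> set ks) (foldl (emit ex) (emit ex st k) ks)"
    using Cons.IH by blast
  then show ?case by simp
qed

lemma length_emit: "length (fst (emit ex st k)) = length (fst st) + ncode (ex k)"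
  using length_comp[of "snd st" "length (fst st)" "ex k"]
  by (auto simp: emit_def split: prod.splits)

lemma length_fold: "length (fst (foldl (emit ex) st ks)) = length (fst st) + (\<Sum>k\<leftarrow>ks. ncode (ex k))"
  by (induction ks arbitrary: st) (auto simp: length_emit)

definition Bf :: "nat \<Rightarrow> (nat \<Rightarrow> nat \<Rightarrow> real) \<Rightarrow> (nat \<Rightarrow> real) \<Rightarrow> (nat \<Rightarrow> real) \<Rightarrow> real" where
  "Bf n S x y = (\<Sum>i<n. \<Sum>j<n. x i * S i j * y j)"

definition dl :: "nat \<Rightarrow> nat \<Rightarrow> real" where "dl i = (\<lambda>j. if j = i then 1 else 0)"

lemma Bf_diff2: "Bf n S x (\<lambda>j. f j - g j) = Bf n S x f - Bf n S x g"
  by (simp add: Bf_def algebra_simps sum_subtractf)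
lemma Bf_diff1: "Bf n S (\<lambda>j. f j - g j) y = Bf n S f y - Bf n S g y"
  by (simp add: Bf_def algebra_simps sum_subtractf)
lemma sum3_swap: "(\<Sum>i\<in>I. \<Sum>j\<in>J. \<Sum>k\<in>A. g i j k) = (\<Sum>k\<in>A. \<Sum>i\<in>I. \<Sum>j\<in>J. g i j k)"
proof -
  have "(\<Sum>i\<in>I. \<Sum>j\<in>J. \<Sum>k\<in>A. g i j k) = (\<Sum>i\<in>I. \<Sum>k\<in>A. \<Sum>j\<in>J. g i j k)"
    by (rule sum.cong[OF refl], rule sum.swap)
  also have "\<dots> = (\<Sum>k\<in>A. \<Sum>i\<in>I. \<Sum>j\<in>J. g i j k)" by (rule sum.swap)
  finally show ?thesis .
qed
lemma Bf_sum2: "Bf n S x (\<lambda>j. \<Sum>k\<in>A. f k j) = (\<Sum>k\<in>A. Bf n S x (f k))"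
proof -
  have "Bf n S x (\<lambda>j. \<Sum>k\<in>A. f k j) = (\<Sum>i<n. \<Sum>j<n. \<Sum>k\<in>A. x i * S i j * f k j)"
    unfolding Bf_def by (simp add: sum_distrib_left)
  also have "\<dots> = (\<Sum>k\<in>A. Bf n S x (f k))" unfolding Bf_def by (rule sum3_swap)
  finally show ?thesis .
qed
lemma Bf_sum1: "Bf n S (\<lambda>j. \<Sum>k\<in>A. f k j) y = (\<Sum>k\<in>A. Bf n S (f k) y)"
proof -
  have "Bf n S (\<lambda>j. \<Sum>k\<in>A. f k j) y = (\<Sum>i<n. \<Sum>j<n. \<Sum>k\<in>A. f k i * S i j * y j)"
    unfolding Bf_def by (simp add: sum_distrib_right)
  also have "\<dots> = (\<Sum>k\<in>A. Bf n S (f k) y)" unfolding Bf_def by (rule sum3_swap)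
  finally show ?thesis .
qed
lemma Bf_scal2: "Bf n S x (\<lambda>j. c * f j) = c * Bf n S x f"
  by (simp add: Bf_def sum_distrib_left algebra_simps)
lemma Bf_scal1: "Bf n S (\<lambda>j. c * f j) y = c * Bf n S f y"
  by (simp add: Bf_def sum_distrib_left algebra_simps)

lemma Bf_sym: "posdef n S \<Longrightarrow> Bf n S x y = Bf n S y x"
  unfolding Bf_def posdef_def
  by (subst sum.swap) (auto intro!: sum.cong)

lemma Bf_dl1: "i < n \<Longrightarrow> Bf n S (dl i) y = (\<Sum>j<n. S i j * y j)"
proof -
  assume "i < n"
  have "(\<Sum>ia<n. \<Sum>j<n. dl i ia * S ia j * y j) = (\<Sum>ia<n. if ia = i then (\<Sum>j<n. S i j * y j) else 0)"
    by (rule sum.cong) (auto simp: dl_def)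
  then show ?thesis using \<open>i < n\<close> by (simp add: Bf_def)
qed

lemma Bf_dl_dl: "i < n \<Longrightarrow> x < n \<Longrightarrow> Bf n S (dl i) (dl x) = S i x"
proof -
  assume a: "i < n" "x < n"
  have "(\<Sum>j<n. S i j * dl x j) = (\<Sum>j<n. if j = x then S i x else 0)"
    by (rule sum.cong) (auto simp: dl_def)
  then show ?thesis using a by (simp add: Bf_dl1)
qed

lemma sum_single: "finite A \<Longrightarrow> k \<in> A \<Longrightarrow> (\<And>x. x \<in> A \<Longrightarrow> x \<noteq> k \<Longrightarrow> f x = 0) \<Longrightarrow> sum f A = f k"
  by (simp add: sum.remove)

function gvec :: "(nat \<Rightarrow> nat \<Rightarrow> real) \<Rightarrow> (nat list \<Rightarrow> nat set) \<Rightarrow> nat \<Rightarrow> nat \<Rightarrow> nat list \<Rightarrow> nat \<Rightarrow> nat \<Rightarrow> real" where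
  "gvec S K r l c t j = dl (knot K c t) j -
     (\<Sum>k<l. \<Sum>a<r. \<Sum>b<r. mat_inv r (\<lambda>x y. mrd_V S K r k (take k c) x y) a b * mrd_V S K r k c t b *
        gvec S K r k (take k c) a j)"
  by pat_completeness auto
termination by (relation "measure (\<lambda>(S, K, r, l, c, t, j). l)") auto

declare gvec.simps [simp del]

lemma gvec_eq: "gvec S K r l c t = (\<lambda>j. dl (knot K c t) j -
     (\<Sum>k<l. \<Sum>a<r. \<Sum>b<r. mat_inv r (\<lambda>x y. mrd_V S K r k (take k c) x y) a b * mrd_V S K r k c t b *
        gvec S K r k (take k c) a j))"
  by (rule ext, subst gvec.simps, rule refl)

definition gs_ok :: "nat \<Rightarrow> nat \<Rightarrow> (nat list \<Rightarrow> nat set) \<Rightarrow> nat list set \<Rightarrow> bool" where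
  "gs_ok n r K N \<longleftrightarrow> (\<forall>c\<in>N. \<forall>k\<le>length c. take k c \<in> N) \<and> (\<forall>c\<in>N. K c \<subseteq> {..<n} \<and> card (K c) = r) \<and>
     (\<forall>c\<in>N. \<forall>k<length c. K c \<inter> K (take k c) = {})"

lemma gs_fin: "gs_ok n r K N \<Longrightarrow> c \<in> N \<Longrightarrow> finite (K c)"
  unfolding gs_ok_def by (meson finite_lessThan finite_subset)

lemma gs_disj: "gs_ok n r K N \<Longrightarrow> c \<in> N \<Longrightarrow> k < length c \<Longrightarrow> x \<in> K c \<Longrightarrow> x \<notin> K (take k c)"
  unfolding gs_ok_def by blast

lemma knot_in: "gs_ok n r K N \<Longrightarrow> c \<in> N \<Longrightarrow> t < r \<Longrightarrow> knot K c t \<in> K c"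
proof -
  assume a: "gs_ok n r K N" "c \<in> N" "t < r"
  then have "finite (K c)" "card (K c) = r" using gs_fin[OF a(1,2)] a unfolding gs_ok_def by auto
  then show ?thesis using a(3) unfolding knot_def
    by (metis length_sorted_list_of_set nth_mem set_sorted_list_of_set)
qed

lemma knot_lt: "gs_ok n r K N \<Longrightarrow> c \<in> N \<Longrightarrow> t < r \<Longrightarrow> knot K c t < n"
  using knot_in[of n r K N c t] unfolding gs_ok_def by auto

lemma knot_inj: "gs_ok n r K N \<Longrightarrow> c \<in> N \<Longrightarrow> s < r \<Longrightarrow> t < r \<Longrightarrow> knot K c s = knot K c t \<longleftrightarrow> s = t"
proof -
  assume a: "gs_ok n r K N" "c \<in> N" "s < r" "t < r"
  then have "finite (K c)" "card (K c) = r" using gs_fin[OF a(1,2)] a unfolding gs_ok_def by auto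
  then show ?thesis using a(3,4) unfolding knot_def
    by (metis distinct_sorted_list_of_set length_sorted_list_of_set nth_eq_iff_index_eq)
qed

lemma V_W: "mrd_V S K r l js s t = mrd_W S K r l js (knot K js s) t"
proof (induction l arbitrary: t rule: less_induct)
  case (less l)
  show ?case
    by (subst mrd_V.simps, subst mrd_W.simps) (simp add: less)
qed

lemma W_take: "mrd_W S K r l js i t = mrd_W S K r l (take l js) i t"
proof (induction l arbitrary: js t rule: less_induct)
  case (less l)
  have "mrd_W S K r l (take l js) i t =
     S i (knot K (take l js) t) -
     (\<Sum>k<l. \<Sum>a<r. \<Sum>b<r. mrd_W S K r k js i a *
         mat_inv r (\<lambda>x y. mrd_V S K r k (take k js) x y) a b * mrd_V S K r k (take l js) t b)"
  proof -
    have h: "mrd_W S K r k (take l js) i a = mrd_W S K r k js i a" if "k < l" for k a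
      using less.IH[OF that, of "take l js" a] less.IH[OF that, of js a] that by (simp add: min_def)
    show ?thesis by (subst mrd_W.simps) (auto intro!: sum.cong simp: min_def h)
  qed
  then show ?case by (subst mrd_W.simps) simp
qed

lemma W_g:
  assumes ok: "gs_ok n r K N" and js: "js \<in> N" and i: "i < n"
  shows "l \<le> length js \<Longrightarrow> t < r \<Longrightarrow> mrd_W S K r l js i t = Bf n S (dl i) (gvec S K r l (take l js) t)"
proof (induction l arbitrary: t rule: less_induct)
  case (less l)
  have tl: "take l js \<in> N" using ok js less.prems unfolding gs_ok_def by auto
  have "Bf n S (dl i) (gvec S K r l (take l js) t) = S i (knot K (take l js) t) -
     (\<Sum>k<l. \<Sum>a<r. \<Sum>b<r. mat_inv r (\<lambda>x y. mrd_V S K r k (take k js) x y) a b * mrd_V S K r k (take l js) t b *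
        Bf n S (dl i) (gvec S K r k (take k js) a))"
    apply (subst gvec_eq)
    apply (simp only: Bf_diff2 Bf_sum2 Bf_scal2)
    using Bf_dl_dl[OF i knot_lt[OF ok tl less.prems(2)], of S]
    by (auto intro!: sum.cong simp: min_def)
  also have "\<dots> = mrd_W S K r l js i t"
  proof -
    have h: "mrd_W S K r k js i a = Bf n S (dl i) (gvec S K r k (take k js) a)" if "k < l" "a < r" for k a
      using less.IH[of k a] less.prems that by auto
    show ?thesis by (subst mrd_W.simps) (auto intro!: sum.cong simp: h)
  qed
  finally show ?case by simp
qed

lemma g_supp:
  assumes ok: "gs_ok n r K N"
  shows "c \<in> N \<Longrightarrow> length c = l \<Longrightarrow> t < r \<Longrightarrow> j \<notin> K c \<Longrightarrow> (\<forall>k<l. j \<notin> K (take k c)) \<Longrightarrow>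
    gvec S K r l c t j = 0"
proof (induction l arbitrary: c t rule: less_induct)
  case (less l)
  have d: "dl (knot K c t) j = 0"
    using knot_in[OF ok less.prems(1,3)] less.prems(4) unfolding dl_def by auto
  have z: "gvec S K r k (take k c) a j = 0" if "k < l" "a < r" for k a
  proof -
    have "take k c \<in> N" using ok less.prems(1,2) that unfolding gs_ok_def by auto
    then show ?thesis
      using less.IH[of k "take k c" a] less.prems that by (auto simp: min_def)
  qed
  show ?case by (subst gvec.simps) (simp add: d z)
qed

lemma gs_main:
  assumes pd: "posdef n S" and ok: "gs_ok n r K N"
    and Hinv: "\<forall>A. posdef r A \<longrightarrow> (\<exists>X. \<forall>a<r. \<forall>b<r. (\<Sum>x<r. A a x * X x b) = (if a = b then 1 else 0))"
  shows "c \<in> N \<Longrightarrow> length c = l \<Longrightarrow>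
    (\<forall>k<l. \<forall>a<r. \<forall>t<r. Bf n S (gvec S K r k (take k c) a) (gvec S K r l c t) = 0) \<and>
    (\<forall>s<r. \<forall>t<r. Bf n S (gvec S K r l c s) (gvec S K r l c t) = mrd_V S K r l c s t) \<and>
    posdef r (\<lambda>x y. mrd_V S K r l c x y) \<and>
    (\<forall>a<r. \<forall>b<r. (\<Sum>x<r. mrd_V S K r l c a x * mat_inv r (\<lambda>x y. mrd_V S K r l c x y) x b) = (if a = b then 1 else 0))"
proof (induction l arbitrary: c rule: less_induct)
  case (less l c)
  note cN = less.prems(1) and lc = less.prems(2)
  have tkN: "take k c \<in> N" for k using ok cN unfolding gs_ok_def by (cases "k \<le> length c") auto
  let ?g = "gvec S K r"
  let ?V = "mrd_V S K r"
  let ?X = "\<lambda>k d. mat_inv r (\<lambda>x y. mrd_V S K r k d x y)"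
  have IHk: "\<And>k. k < l \<Longrightarrow>
    (\<forall>k'<k. \<forall>a<r. \<forall>t<r. Bf n S (?g k' (take k' (take k c)) a) (?g k (take k c) t) = 0) \<and>
    (\<forall>s<r. \<forall>t<r. Bf n S (?g k (take k c) s) (?g k (take k c) t) = ?V k (take k c) s t) \<and>
    posdef r (\<lambda>x y. ?V k (take k c) x y) \<and>
    (\<forall>a<r. \<forall>b<r. (\<Sum>x<r. ?V k (take k c) a x * ?X k (take k c) x b) = (if a = b then 1 else 0))"
    using less.IH[OF _ tkN] lc by simp
  have orth: "Bf n S (?g k (take k c) a) (?g l c t) = 0" if kl: "k < l" and a: "a < r" and t: "t < r" for k a t
  proof -
    define d where "d = take k c"
    have zero: "Bf n S (?g k d a) (?g k' (take k' c) a') = 0" if "k' < l" "k' \<noteq> k" "a' < r" for k' a'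
    proof (cases "k' < k")
      case True
      then have "Bf n S (?g k' (take k' d) a') (?g k d a) = 0" using IHk[OF kl] a that unfolding d_def by blast
      then show ?thesis using True Bf_sym[OF pd] unfolding d_def by (simp add: min_def)
    next
      case False
      then have "k < k'" using that by simp
      then have "Bf n S (?g k (take k (take k' c)) a) (?g k' (take k' c) a') = 0"
        using IHk[OF \<open>k' < l\<close>] a that by blast
      then show ?thesis using \<open>k < k'\<close> unfolding d_def by (simp add: min_def)
    qed
    have "Bf n S (?g k d a) (?g l c t) = Bf n S (?g k d a) (dl (knot K c t)) -
      (\<Sum>k'<l. \<Sum>a'<r. \<Sum>b'<r. ?X k' (take k' c) a' b' * ?V k' c t b' * Bf n S (?g k d a) (?g k' (take k' c) a'))"
      by (subst (2) gvec_eq) (simp only: Bf_diff2 Bf_sum2 Bf_scal2)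
    also have "(\<Sum>k'<l. \<Sum>a'<r. \<Sum>b'<r. ?X k' (take k' c) a' b' * ?V k' c t b' * Bf n S (?g k d a) (?g k' (take k' c) a'))
       = (\<Sum>a'<r. \<Sum>b'<r. ?X k d a' b' * ?V k c t b' * Bf n S (?g k d a) (?g k d a'))"
    proof (subst sum_single[of "{..<l}" k])
      fix k' assume "k' \<in> {..<l}" "k' \<noteq> k"
      then show "(\<Sum>a'<r. \<Sum>b'<r. ?X k' (take k' c) a' b' * ?V k' c t b' * Bf n S (?g k d a) (?g k' (take k' c) a')) = 0"
        using zero by (auto intro!: sum.neutral)
    qed (auto simp: kl d_def)
    also have "\<dots> = (\<Sum>a'<r. \<Sum>b'<r. ?X k d a' b' * ?V k c t b' * ?V k d a a')"
      using IHk[OF kl] a unfolding d_def by (auto intro!: sum.cong)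
    also have "\<dots> = (\<Sum>b'<r. ?V k c t b' * (\<Sum>a'<r. ?V k d a a' * ?X k d a' b'))"
      by (subst sum.swap) (auto intro!: sum.cong simp: sum_distrib_left algebra_simps)
    also have "\<dots> = (\<Sum>b'<r. ?V k c t b' * (if a = b' then 1 else 0))"
      using IHk[OF kl] a unfolding d_def by (auto intro!: sum.cong)
    also have "\<dots> = ?V k c t a" using a by (simp add: if_distrib cong: if_cong)
    also have "Bf n S (?g k d a) (dl (knot K c t)) = ?V k c t a"
    proof -
      have "Bf n S (?g k d a) (dl (knot K c t)) = Bf n S (dl (knot K c t)) (?g k d a)" by (rule Bf_sym[OF pd])
      also have "\<dots> = mrd_W S K r k c (knot K c t) a"
        using W_g[OF ok cN knot_lt[OF ok cN t], of k a S] kl lc a unfolding d_def by simp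
      finally show ?thesis by (simp add: V_W)
    qed
    finally show ?thesis unfolding d_def by simp
  qed
  have gram: "Bf n S (?g l c s) (?g l c t) = ?V l c s t" if s: "s < r" and t: "t < r" for s t
  proof -
    have "Bf n S (?g l c s) (?g l c t) = Bf n S (dl (knot K c s)) (?g l c t) -
      (\<Sum>k<l. \<Sum>a<r. \<Sum>b<r. ?X k (take k c) a b * ?V k c s b * Bf n S (?g k (take k c) a) (?g l c t))"
      by (subst (1) gvec_eq) (simp only: Bf_diff1 Bf_sum1 Bf_scal1)
    also have "\<dots> = Bf n S (dl (knot K c s)) (?g l c t)"
      by (simp add: orth t)
    also have "\<dots> = mrd_W S K r l c (knot K c s) t"
      using W_g[OF ok cN knot_lt[OF ok cN s], of l t S] lc t by simp
    finally show ?thesis by (simp add: V_W)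
  qed
  have sym: "?V l c s t = ?V l c t s" if "s < r" "t < r" for s t
    using gram[of s t] gram[of t s] that Bf_sym[OF pd] by metis
  have pos: "(\<Sum>s<r. \<Sum>t<r. x s * ?V l c s t * x t) > 0" if x: "\<exists>i<r. x i \<noteq> 0" for x
  proof -
    obtain s0 where s0: "s0 < r" "x s0 \<noteq> 0" using x by blast
    define y where "y = (\<lambda>j. \<Sum>s<r. x s * ?g l c s j)"
    have gk: "?g l c s (knot K c s0) = (if s = s0 then 1 else 0)" if s: "s < r" for s
    proof -
      have z: "?g k (take k c) a (knot K c s0) = 0" if "k < l" "a < r" for k a
      proof (rule g_supp[OF ok tkN])
        show "length (take k c) = k" using that lc by simp
        show "a < r" by fact
        have kin: "knot K c s0 \<in> K c" by (rule knot_in[OF ok cN s0(1)])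
        show "knot K c s0 \<notin> K (take k c)"
          using gs_disj[OF ok cN _ kin] that lc by simp
        show "\<forall>k'<k. knot K c s0 \<notin> K (take k' (take k c))"
          using gs_disj[OF ok cN _ kin] that lc by (simp add: min_def)
      qed
      show ?thesis
        by (subst gvec.simps) (simp add: z dl_def knot_inj[OF ok cN s0(1) s] eq_commute)
    qed
    have "y (knot K c s0) = x s0"
      unfolding y_def using s0 by (simp add: gk if_distrib cong: if_cong)
    then have "\<exists>i<n. y i \<noteq> 0" using knot_lt[OF ok cN s0(1)] s0 by auto
    then have "Bf n S y y > 0" using pd unfolding posdef_def Bf_def by (elim conjE allE[of _ y]) simp
    also have "Bf n S y y = (\<Sum>s<r. \<Sum>t<r. x s * x t * Bf n S (?g l c s) (?g l c t))"
      unfolding y_def by (simp only: Bf_sum1 Bf_sum2 Bf_scal1 Bf_scal2 sum_distrib_left mult.assoc)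
    also have "\<dots> = (\<Sum>s<r. \<Sum>t<r. x s * ?V l c s t * x t)"
      by (auto intro!: sum.cong simp: gram)
    finally show ?thesis .
  qed
  have pdV: "posdef r (\<lambda>x y. ?V l c x y)"
    unfolding posdef_def using sym pos by blast
  have inv: "\<forall>a<r. \<forall>b<r. (\<Sum>x<r. ?V l c a x * ?X l c x b) = (if a = b then 1 else 0)"
  proof -
    obtain X where "\<forall>a<r. \<forall>b<r. (\<Sum>x<r. ?V l c a x * X x b) = (if a = b then 1 else 0)"
      using Hinv pdV by blast
    then have "\<exists>X. \<forall>a<r. \<forall>b<r. (\<Sum>x<r. ?V l c a x * X x b) = (if a = b then 1 else 0)" by blast
    then show ?thesis unfolding mat_inv_def by (rule someI_ex)
  qed
  show ?case
  proof (intro conjI allI impI)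
    show "\<And>k a t. k < l \<Longrightarrow> a < r \<Longrightarrow> t < r \<Longrightarrow> Bf n S (?g k (take k c) a) (?g l c t) = 0"
      by (rule orth)
    show "\<And>s t. s < r \<Longrightarrow> t < r \<Longrightarrow> Bf n S (?g l c s) (?g l c t) = ?V l c s t"
      by (rule gram)
  qed (use pdV inv in auto)
qed

lemma inv1: "\<forall>A. posdef 1 A \<longrightarrow> (\<exists>X. \<forall>a<1. \<forall>b<1. (\<Sum>x<1. A a x * X x b) = (if a = b then 1 else (0::real)))"
proof (intro allI impI)
  fix A assume "posdef 1 A"
  then have "A 0 0 > 0" unfolding posdef_def
    by (elim conjE allE[of _ "\<lambda>_. 1"]) auto
  then show "\<exists>X. \<forall>a<1. \<forall>b<1. (\<Sum>x<1. A a x * X x b) = (if a = b then 1 else 0)"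
    by (intro exI[of _ "\<lambda>_ _. 1 / A 0 0"]) auto
qed

function Gf :: "(nat \<Rightarrow> nat \<Rightarrow> real) \<Rightarrow> nat \<Rightarrow> nat \<Rightarrow> real" where
  "Gf A j i = A i j - (\<Sum>k<j. Gf A k i * Gf A k j / Gf A k k)"
  by pat_completeness auto
termination by (relation "measure (\<lambda>(A, j, i). j)") auto

declare Gf.simps [simp del]

lemma gs_ok_K1: "gs_ok m 1 (\<lambda>c. {length c}) {c. length c < m}"
  unfolding gs_ok_def by auto

lemma knot_K1: "knot (\<lambda>c. {length c}) c 0 = length c"
  by (simp add: knot_def)

lemma Gf_V:
  assumes pd: "posdef m A"
  shows "j \<le> i \<Longrightarrow> i < m \<Longrightarrow> Gf A j i = mrd_V A (\<lambda>c. {length c}) 1 j (replicate i 0) 0 0 \<and> Gf A j j > 0"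
proof (induction j arbitrary: i rule: less_induct)
  case (less j)
  let ?K = "\<lambda>c::nat list. {length c}"
  let ?V = "\<lambda>k c. mrd_V A ?K 1 k c 0 0"
  have M: "(\<forall>s<1. \<forall>t<1. True) \<and> posdef 1 (\<lambda>x y. mrd_V A ?K 1 k (replicate k 0) x y) \<and>
      (\<forall>a<1. \<forall>b<1. (\<Sum>x<1. mrd_V A ?K 1 k (replicate k 0) a x * mat_inv 1 (\<lambda>x y. mrd_V A ?K 1 k (replicate k 0) x y) x b) = (if a = b then 1 else 0))"
    if "k < m" for k
    using gs_main[OF pd gs_ok_K1 inv1, of "replicate k 0" k] that by auto
  have pos: "?V k (replicate k 0) > 0" if "k < m" for k
  proof -
    have "posdef 1 (\<lambda>x y. mrd_V A ?K 1 k (replicate k 0) x y)" using M[OF that] by blast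
    then show ?thesis unfolding posdef_def
      by (elim conjE allE[of _ "\<lambda>_. 1"]) auto
  qed
  have inv: "mat_inv 1 (\<lambda>x y. mrd_V A ?K 1 k (replicate k 0) x y) 0 0 = 1 / ?V k (replicate k 0)" if "k < m" for k
  proof -
    have "?V k (replicate k 0) * mat_inv 1 (\<lambda>x y. mrd_V A ?K 1 k (replicate k 0) x y) 0 0 = 1"
      using M[OF that] by auto
    then show ?thesis using pos[OF that] by (simp add: field_simps)
  qed
  have eq: "Gf A j i = ?V j (replicate i 0)" if pr: "j \<le> i" "i < m" for i
  proof -
    have inv': "mat_inv 1 (\<lambda>x y. mrd_V A ?K 1 k (replicate k 0) x y) 0 0 = 1 / ?V k (replicate k 0)"
      if "k < j" for k using inv[of k] that pr by simp
    have "?V j (replicate i 0) = A i j - (\<Sum>k<j. ?V k (replicate i 0) * mat_inv 1 (\<lambda>x y. mrd_V A ?K 1 k (replicate k 0) x y) 0 0 * ?V k (replicate j 0))"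
      using pr by (subst mrd_V.simps) (auto simp: knot_K1 min_def intro!: sum.cong)
    also have "\<dots> = A i j - (\<Sum>k<j. ?V k (replicate i 0) * (1 / ?V k (replicate k 0)) * ?V k (replicate j 0))"
      by (rule arg_cong[where f="\<lambda>x. A i j - x"], rule sum.cong[OF refl]) (simp only: inv' lessThan_iff)
    also have "\<dots> = Gf A j i"
    proof (subst Gf.simps, rule arg_cong[where f="\<lambda>x. A i j - x"], rule sum.cong[OF refl])
      fix k assume "k \<in> {..<j}"
      then have k: "k < j" by simp
      have "Gf A k i = ?V k (replicate i 0)" "Gf A k j = ?V k (replicate j 0)" "Gf A k k = ?V k (replicate k 0)"
        using less.IH[OF k, of i] less.IH[OF k, of j] less.IH[OF k, of k] k pr by auto
      then show "?V k (replicate i 0) * (1 / ?V k (replicate k 0)) * ?V k (replicate j 0) = Gf A k i * Gf A k j / Gf A k k"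
        by simp
    qed
    finally show ?thesis by simp
  qed
  have "Gf A j j > 0"
    using eq[of j] pos[of j] less.prems by simp
  then show ?case using eq less.prems by simp
qed

definition Lf :: "(nat \<Rightarrow> nat \<Rightarrow> real) \<Rightarrow> nat \<Rightarrow> nat \<Rightarrow> real" where
  "Lf A i j = (if j \<le> i then Gf A j i / sqrt (Gf A j j) else 0)"

definition cholP :: "nat \<Rightarrow> (nat \<Rightarrow> nat \<Rightarrow> real) \<Rightarrow> (nat \<Rightarrow> nat \<Rightarrow> real) \<Rightarrow> bool" where
  "cholP r A L \<longleftrightarrow> (\<forall>i<r. \<forall>j<r. i < j \<longrightarrow> L i j = 0) \<and> (\<forall>i<r. L i i > 0) \<and>
                      (\<forall>i<r. \<forall>j<r. (\<Sum>k<r. L i k * L j k) = A i j)"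

lemma sum_lower:
  fixes j r :: nat and f :: "nat \<Rightarrow> real" and L :: "nat \<Rightarrow> nat \<Rightarrow> real"
  assumes a: "j < r" "\<forall>k<r. j < k \<longrightarrow> L j k = 0"
  shows "(\<Sum>k<r. f k * L j k) = (\<Sum>k<j. f k * L j k) + f j * L j j"
proof -
  have "(\<Sum>k<r. f k * L j k) = (\<Sum>k<r. if k \<le> j then f k * L j k else 0)"
    using a by (intro sum.cong) auto
  also have "\<dots> = (\<Sum>k\<in>{..<r} \<inter> {..j}. f k * L j k)"
    by (simp add: sum.inter_restrict)
  also have "{..<r} \<inter> {..j} = insert j {..<j}" using a by auto
  finally show ?thesis by simp
qed

lemma Lf_chol: assumes pd: "posdef m A" shows "cholP m A (Lf A)"
proof -
  have G: "Gf A j j > 0" if "j \<le> i" "i < m" for i j using Gf_V[OF pd that] by simp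
  have diag: "Lf A i i = sqrt (Gf A i i)" if "i < m" for i
  proof -
    have "Gf A i i > 0" using G[of i i] that by simp
    then show ?thesis unfolding Lf_def by (simp add: real_div_sqrt)
  qed
  have low: "(\<Sum>k<m. Lf A i k * Lf A j k) = A i j" if "j \<le> i" "i < m" for i j
  proof -
    have "(\<Sum>k<m. Lf A i k * Lf A j k) = (\<Sum>k<j. Lf A i k * Lf A j k) + Lf A i j * Lf A j j"
    proof -
      have z: "\<forall>k<m. j < k \<longrightarrow> Lf A j k = 0" by (simp add: Lf_def)
      have "j < m" using that by simp
      then show ?thesis by (rule sum_lower[where L="Lf A" and f="Lf A i", OF _ z])
    qed
    also have "(\<Sum>k<j. Lf A i k * Lf A j k) = (\<Sum>k<j. Gf A k i * Gf A k j / Gf A k k)"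
    proof (rule sum.cong)
      fix k assume k: "k \<in> {..<j}"
      then have p: "Gf A k k > 0" using G[of k k] that by auto
      have "Lf A i k * Lf A j k = (Gf A k i / sqrt (Gf A k k)) * (Gf A k j / sqrt (Gf A k k))"
        using k that unfolding Lf_def by auto
      also have "\<dots> = Gf A k i * Gf A k j / (sqrt (Gf A k k) * sqrt (Gf A k k))" by simp
      also have "sqrt (Gf A k k) * sqrt (Gf A k k) = Gf A k k" using p by simp
      finally show "Lf A i k * Lf A j k = Gf A k i * Gf A k j / Gf A k k" .
    qed simp
    finally have e1: "(\<Sum>k<m. Lf A i k * Lf A j k) = (\<Sum>k<j. Gf A k i * Gf A k j / Gf A k k) + Lf A i j * Lf A j j" .
    have p: "Gf A j j > 0" using G[of j j] that by auto
    have "Lf A i j * Lf A j j = (Gf A j i / sqrt (Gf A j j)) * (Gf A j j / sqrt (Gf A j j))"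
      using that unfolding Lf_def by auto
    also have "\<dots> = Gf A j i * (Gf A j j / (sqrt (Gf A j j) * sqrt (Gf A j j)))" by simp
    also have "sqrt (Gf A j j) * sqrt (Gf A j j) = Gf A j j" using p by simp
    finally have e2: "Lf A i j * Lf A j j = Gf A j i" using p by simp
    have e3: "Gf A j i = A i j - (\<Sum>k<j. Gf A k i * Gf A k j / Gf A k k)" by (subst Gf.simps) simp
    from e1 e2 e3 show ?thesis by linarith
  qed
  have sym: "A i j = A j i" if "i < m" "j < m" for i j using pd that unfolding posdef_def by auto
  show ?thesis unfolding cholP_def
  proof (intro conjI allI impI)
    fix i j assume "i < m" "j < m" "i < j" then show "Lf A i j = 0" by (simp add: Lf_def)
  next
    fix i assume "i < m" then show "Lf A i i > 0" using diag G[of i i] by simp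
  next
    fix i j assume a: "i < m" "j < m"
    show "(\<Sum>k<m. Lf A i k * Lf A j k) = A i j"
    proof (cases "j \<le> i")
      case True then show ?thesis using low a by simp
    next
      case False
      then have "(\<Sum>k<m. Lf A j k * Lf A i k) = A j i" using low a by simp
      then show ?thesis using sym a by (simp add: mult.commute)
    qed
  qed
qed

lemma chol_unique:
  assumes P1: "cholP m A L1" and P2: "cholP m A L2"
  shows "j < m \<Longrightarrow> \<forall>i<m. L1 i j = L2 i j"
proof (induction j rule: less_induct)
  case (less j)
  have z1: "\<forall>k<m. j' < k \<longrightarrow> L1 j' k = 0" if "j' < m" for j' using P1 that unfolding cholP_def by auto
  have z2: "\<forall>k<m. j' < k \<longrightarrow> L2 j' k = 0" if "j' < m" for j' using P2 that unfolding cholP_def by auto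
  have e: "(\<Sum>k<j. L1 i k * L1 j k) + L1 i j * L1 j j = (\<Sum>k<j. L2 i k * L2 j k) + L2 i j * L2 j j"
    if "i < m" for i
  proof -
    have "(\<Sum>k<m. L1 i k * L1 j k) = A i j" "(\<Sum>k<m. L2 i k * L2 j k) = A i j"
      using P1 P2 that less.prems unfolding cholP_def by auto
    then show ?thesis using sum_lower[where L=L1 and f="L1 i", OF less.prems z1[OF less.prems]]
        sum_lower[where L=L2 and f="L2 i", OF less.prems z2[OF less.prems]] by simp
  qed
  have prev: "(\<Sum>k<j. L1 i k * L1 j k) = (\<Sum>k<j. L2 i k * L2 j k)" if "i < m" for i
    using less.IH less.prems that by (auto intro!: sum.cong)
  have dj: "L1 j j = L2 j j"
  proof -
    have "L1 j j * L1 j j = L2 j j * L2 j j" using e[OF less.prems] prev[OF less.prems] by simp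
    moreover have "L1 j j > 0" "L2 j j > 0" using P1 P2 less.prems unfolding cholP_def by auto
    moreover have "(L1 j j - L2 j j) * (L1 j j + L2 j j) = L1 j j * L1 j j - L2 j j * L2 j j"
      by (simp add: algebra_simps)
    ultimately show ?thesis by simp
  qed
  show ?case
  proof (intro allI impI)
    fix i assume "i < m"
    have "L1 i j * L1 j j = L2 i j * L2 j j" using e[OF \<open>i < m\<close>] prev[OF \<open>i < m\<close>] by simp
    moreover have "L1 j j > 0" using P1 less.prems unfolding cholP_def by auto
    ultimately show "L1 i j = L2 i j" using dj by simp
  qed
qed

lemma chol_eq: assumes pd: "posdef m A" shows "i < m \<Longrightarrow> j < m \<Longrightarrow> chol m A i j = Lf A i j"
proof -
  assume a: "i < m" "j < m"
  have "cholP m A (chol m A)" unfolding chol_def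
    using someI[of "cholP m A", OF Lf_chol[OF pd]] unfolding cholP_def by simp
  then show ?thesis using chol_unique[OF _ Lf_chol[OF pd]] a by blast
qed

function tsol :: "(nat \<Rightarrow> nat \<Rightarrow> real) \<Rightarrow> nat \<Rightarrow> nat \<Rightarrow> real" where
  "tsol L j i = ((if i = j then 1 else 0) - (\<Sum>k<i. L i k * tsol L j k)) / L i i"
  by pat_completeness auto
termination by (relation "measure (\<lambda>(L, j, i). i)") auto

declare tsol.simps [simp del]

function usol :: "nat \<Rightarrow> (nat \<Rightarrow> nat \<Rightarrow> real) \<Rightarrow> nat \<Rightarrow> nat \<Rightarrow> real" where
  "usol m L j i = (if i < m then ((if i = j then 1 else 0) - (\<Sum>k\<in>{Suc i..<m}. L k i * usol m L j k)) / L i i else 0)"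
  by pat_completeness auto
termination by (relation "measure (\<lambda>(m, L, j, i). m - i)") auto

declare usol.simps [simp del]

definition lowtri :: "nat \<Rightarrow> (nat \<Rightarrow> nat \<Rightarrow> real) \<Rightarrow> bool" where
  "lowtri m L \<longleftrightarrow> (\<forall>i<m. \<forall>k<m. i < k \<longrightarrow> L i k = 0) \<and> (\<forall>i<m. L i i \<noteq> 0)"

lemma tsol_ok:
  assumes lt: "lowtri m L" and i: "i < m"
  shows "(\<Sum>k<m. L i k * tsol L j k) = (if i = j then 1 else 0)"
proof -
  have "(\<Sum>k<m. L i k * tsol L j k) = (\<Sum>k<m. tsol L j k * L i k)" by (simp add: mult.commute)
  also have "\<dots> = (\<Sum>k<i. tsol L j k * L i k) + tsol L j i * L i i"
    by (rule sum_lower[OF i]) (use lt i in \<open>auto simp: lowtri_def\<close>)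
  also have "tsol L j i * L i i = (if i = j then 1 else 0) - (\<Sum>k<i. L i k * tsol L j k)"
    using lt i unfolding lowtri_def by (subst tsol.simps) simp
  finally show ?thesis by (simp add: mult.commute)
qed

lemma usol_ok:
  assumes lt: "lowtri m L" and i: "i < m"
  shows "(\<Sum>k<m. L k i * usol m L j k) = (if i = j then 1 else 0)"
proof -
  have split: "{..<m} = {..<i} \<union> ({i} \<union> {Suc i..<m})" using i by auto
  have "(\<Sum>k<m. L k i * usol m L j k) = (\<Sum>k<i. L k i * usol m L j k) + (L i i * usol m L j i + (\<Sum>k\<in>{Suc i..<m}. L k i * usol m L j k))"
  proof -
    let ?f = "\<lambda>k. L k i * usol m L j k"
    have "(\<Sum>k<m. ?f k) = (\<Sum>k\<in>{0..<i}. ?f k) + (\<Sum>k\<in>{i..<m}. ?f k)"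
      using i by (simp add: lessThan_atLeast0 sum.atLeastLessThan_concat)
    also have "(\<Sum>k\<in>{i..<m}. ?f k) = ?f i + (\<Sum>k\<in>{Suc i..<m}. ?f k)"
      using i by (simp add: sum.atLeast_Suc_lessThan)
    finally show ?thesis by (simp add: lessThan_atLeast0)
  qed
  also have "(\<Sum>k<i. L k i * usol m L j k) = 0"
    using lt i unfolding lowtri_def by (auto intro!: sum.neutral)
  also have "L i i * usol m L j i = (if i = j then 1 else 0) - (\<Sum>k\<in>{Suc i..<m}. L k i * usol m L j k)"
    using lt i unfolding lowtri_def by (subst usol.simps) simp
  finally show ?thesis by simp
qed

definition Xf :: "nat \<Rightarrow> (nat \<Rightarrow> nat \<Rightarrow> real) \<Rightarrow> nat \<Rightarrow> nat \<Rightarrow> real" where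
  "Xf m L a b = (\<Sum>k<m. usol m L k a * tsol L b k)"

lemma Xf_inv:
  assumes lt: "lowtri m L" and AL: "\<forall>a<m. \<forall>x<m. A a x = (\<Sum>y<m. L a y * L x y)" and a: "a < m" and b: "b < m"
  shows "(\<Sum>x<m. A a x * Xf m L x b) = (if a = b then 1 else 0)"
proof -
  have "(\<Sum>x<m. A a x * Xf m L x b) = (\<Sum>x<m. (\<Sum>y<m. L a y * L x y) * (\<Sum>k<m. usol m L k x * tsol L b k))"
    using AL a unfolding Xf_def by (auto intro!: sum.cong)
  also have "\<dots> = (\<Sum>x<m. \<Sum>y<m. \<Sum>k<m. (L a y * L x y) * (usol m L k x * tsol L b k))"
    by (simp add: sum_product)
  also have "\<dots> = (\<Sum>x<m. \<Sum>y<m. \<Sum>k<m. L a y * (L x y * usol m L k x) * tsol L b k)"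
    by (simp add: ac_simps)
  also have "\<dots> = (\<Sum>y<m. \<Sum>k<m. \<Sum>x<m. L a y * (L x y * usol m L k x) * tsol L b k)"
    by (rule sum3_swap[symmetric])
  also have "\<dots> = (\<Sum>y<m. \<Sum>k<m. L a y * (\<Sum>x<m. L x y * usol m L k x) * tsol L b k)"
    by (simp add: sum_distrib_left sum_distrib_right)
  also have "\<dots> = (\<Sum>y<m. \<Sum>k<m. L a y * (if y = k then 1 else 0) * tsol L b k)"
    using usol_ok[OF lt] by (auto intro!: sum.cong)
  also have "\<dots> = (\<Sum>y<m. L a y * tsol L b y)"
  proof (rule sum.cong[OF refl])
    fix y assume y: "y \<in> {..<m}"
    have "(\<Sum>k<m. L a y * (if y = k then 1 else 0) * tsol L b k) = (\<Sum>k<m. if y = k then L a y * tsol L b y else 0)"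
      by (rule sum.cong) auto
    then show "(\<Sum>k<m. L a y * (if y = k then 1 else 0) * tsol L b k) = L a y * tsol L b y" using y by simp
  qed
  also have "\<dots> = (if a = b then 1 else 0)" by (rule tsol_ok[OF lt a])
  finally show ?thesis .
qed

lemma mat_inv_cong: "(\<forall>i<r. \<forall>k<r. L1 i k = L2 i k) \<Longrightarrow> mat_inv r L1 = mat_inv r L2"
  unfolding mat_inv_def by (rule arg_cong[where f=Eps]) (auto intro!: ext sum.cong)

lemma mat_inv_low:
  assumes lt: "lowtri m L" and j: "j < m"
  shows "k < m \<Longrightarrow> mat_inv m L k j = tsol L j k"
proof -
  have P: "\<forall>i<m. \<forall>j<m. (\<Sum>k<m. L i k * mat_inv m L k j) = (if i = j then 1 else 0)"
    unfolding mat_inv_def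
    by (rule someI[where x="\<lambda>k j. tsol L j k"]) (use tsol_ok[OF lt] in auto)
  show "k < m \<Longrightarrow> mat_inv m L k j = tsol L j k"
  proof (induction k rule: less_induct)
    case (less k)
    have "(\<Sum>k'<m. L k k' * mat_inv m L k' j) = (\<Sum>k'<m. mat_inv m L k' j * L k k')" by (simp add: mult.commute)
    also have "\<dots> = (\<Sum>k'<k. mat_inv m L k' j * L k k') + mat_inv m L k j * L k k"
      by (rule sum_lower[OF less.prems]) (use lt less.prems in \<open>auto simp: lowtri_def\<close>)
    also have "(\<Sum>k'<k. mat_inv m L k' j * L k k') = (\<Sum>k'<k. L k k' * tsol L j k')"
      using less.IH less.prems by (auto intro!: sum.cong)
    finally have "mat_inv m L k j * L k k = (if k = j then 1 else 0) - (\<Sum>k'<k. L k k' * tsol L j k')"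
      using P less.prems j by auto
    then show ?case using lt less.prems unfolding lowtri_def by (subst tsol.simps) (simp add: field_simps)
  qed
qed

lemma mat_inv_pd:
  assumes pd: "posdef m A" and X: "\<forall>a<m. \<forall>b<m. (\<Sum>x<m. A a x * X x b) = (if a = b then 1 else 0)"
    and a: "a < m" and b: "b < m"
  shows "mat_inv m A a b = X a b"
proof -
  have P: "\<forall>a<m. \<forall>b<m. (\<Sum>x<m. A a x * mat_inv m A x b) = (if a = b then 1 else 0)"
    unfolding mat_inv_def by (rule someI[where x=X]) (use X in auto)
  define z where "z = (\<lambda>x. mat_inv m A x b - X x b)"
  have Az: "(\<Sum>x<m. A i x * z x) = 0" if "i < m" for i
    using P X that b unfolding z_def by (simp add: algebra_simps sum_subtractf)
  have "(\<Sum>i<m. \<Sum>x<m. z i * A i x * z x) = (\<Sum>i<m. z i * (\<Sum>x<m. A i x * z x))"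
    by (simp add: sum_distrib_left algebra_simps)
  also have "\<dots> = 0" using Az by simp
  finally have s0: "(\<Sum>i<m. \<Sum>x<m. z i * A i x * z x) = 0" .
  have "\<not> (\<exists>i<m. z i \<noteq> 0)"
  proof
    assume "\<exists>i<m. z i \<noteq> 0"
    then have "(\<Sum>i<m. \<Sum>x<m. z i * A i x * z x) > 0" using pd unfolding posdef_def by blast
    then show False using s0 by simp
  qed
  then show ?thesis using a unfolding z_def by auto
qed

lemma pd_low: "posdef m A \<Longrightarrow> lowtri m (Lf A)"
  using Lf_chol[of m A] unfolding cholP_def lowtri_def by auto

lemma pd_AL: "posdef m A \<Longrightarrow> \<forall>a<m. \<forall>x<m. A a x = (\<Sum>y<m. Lf A a y * Lf A x y)"
  using Lf_chol[of m A] unfolding cholP_def by auto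

lemma pd_Gf: "posdef m A \<Longrightarrow> j < m \<Longrightarrow> Gf A j j > 0"
  using Gf_V[of m A j j] by simp

lemma pd_inv: "posdef m A \<Longrightarrow> a < m \<Longrightarrow> b < m \<Longrightarrow> mat_inv m A a b = Xf m (Lf A) a b"
  using mat_inv_pd[of m A "Xf m (Lf A)"] Xf_inv[OF pd_low pd_AL] by blast

lemma pd_inv_chol: "posdef m A \<Longrightarrow> t < m \<Longrightarrow> a < m \<Longrightarrow> mat_inv m (chol m A) t a = tsol (Lf A) a t"
proof -
  assume a: "posdef m A" "t < m" "a < m"
  have "mat_inv m (chol m A) = mat_inv m (Lf A)"
    by (rule mat_inv_cong) (use chol_eq[OF a(1)] in auto)
  then show ?thesis using mat_inv_low[OF pd_low[OF a(1)] a(3) a(2)] by simp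
qed

lemma Hinv_all: "\<forall>A. posdef m A \<longrightarrow> (\<exists>X. \<forall>a<m. \<forall>b<m. (\<Sum>x<m. A a x * X x b) = (if a = b then 1 else (0::real)))"
  using Xf_inv[OF pd_low pd_AL] by blast

locale mrdS =
  fixes n J M r :: nat and I K :: "nat list \<Rightarrow> nat set"
  assumes st: "mrd_structure n J M r I K"
begin

lemma J_pos: "0 < J" using st unfolding mrd_structure_def by (elim conjE) assumption
lemma I_root: "I [] = {0..<n}" using st unfolding mrd_structure_def by (elim conjE) assumption
lemma I_split: "\<forall>m<M. \<forall>js\<in>tuples J m.
        I js = (\<Union>j\<in>{1..J}. I (js @ [j])) \<and>
        (\<forall>j\<in>{1..J}. \<forall>j'\<in>{1..J}. j \<noteq> j' \<longrightarrow> I (js @ [j]) \<inter> I (js @ [j']) = {})"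
  using st unfolding mrd_structure_def by (elim conjE) assumption
lemma K_prop: "\<forall>m\<le>M. \<forall>js\<in>tuples J m. K js \<subseteq> I js - (\<Union>l<m. K (take l js)) \<and> card (K js) = r"
  using st unfolding mrd_structure_def by (elim conjE) assumption
lemma K_cover: "(\<Union>m\<le>M. \<Union>js\<in>tuples J m. K js) = {0..<n}"
  using st unfolding mrd_structure_def by (elim conjE) assumption
lemma K_disj: "\<forall>m\<le>M. \<forall>m'\<le>M. \<forall>js\<in>tuples J m. \<forall>js'\<in>tuples J m'. js \<noteq> js' \<longrightarrow> K js \<inter> K js' = {}"
  using st unfolding mrd_structure_def by (elim conjE) assumption

definition Nodes :: "nat list set" where "Nodes = {c. length c \<le> M \<and> set c \<subseteq> {1..J}}"

lemma Nodes_tuples: "c \<in> Nodes \<longleftrightarrow> (\<exists>m\<le>M. c \<in> tuples J m)"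
  unfolding Nodes_def tuples_def by auto

lemma tuples_Nodes: "m \<le> M \<Longrightarrow> c \<in> tuples J m \<Longrightarrow> c \<in> Nodes"
  using Nodes_tuples by blast

lemma tuples_len: "c \<in> tuples J m \<Longrightarrow> length c = m" unfolding tuples_def by simp

lemma Nodes_take: "c \<in> Nodes \<Longrightarrow> take k c \<in> Nodes"
  unfolding Nodes_def by (auto dest: in_set_takeD)

lemma Nodes_fin: "finite Nodes"
proof -
  have "Nodes = {xs. set xs \<subseteq> {1..J} \<and> length xs \<le> M}" unfolding Nodes_def by auto
  then show ?thesis using finite_lists_length_le[of "{1..J}" M] by simp
qed

lemma K_sub_I: "c \<in> Nodes \<Longrightarrow> K c \<subseteq> I c"
  using K_prop unfolding Nodes_tuples by blast

lemma K_sub_n: "c \<in> Nodes \<Longrightarrow> K c \<subseteq> {..<n}"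
  using K_cover unfolding Nodes_tuples by fastforce

lemma K_card: "c \<in> Nodes \<Longrightarrow> card (K c) = r"
  using K_prop unfolding Nodes_tuples by blast

lemma K_anc: "c \<in> Nodes \<Longrightarrow> k < length c \<Longrightarrow> K c \<inter> K (take k c) = {}"
proof -
  assume c: "c \<in> Nodes" "k < length c"
  then obtain m where "m \<le> M" "c \<in> tuples J m" using Nodes_tuples by blast
  moreover then have "length c = m" by (simp add: tuples_len)
  ultimately show ?thesis using K_prop c(2) by blast
qed

lemma gs: "gs_ok n r K Nodes"
  unfolding gs_ok_def using Nodes_take K_sub_n K_card K_anc by blast

lemma I_step: "c \<in> Nodes \<Longrightarrow> k < length c \<Longrightarrow> I (take (Suc k) c) \<subseteq> I (take k c)"
proof -
  assume c: "c \<in> Nodes" "k < length c"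
  have tk: "take k c \<in> tuples J k" and kM: "k < M"
    using c unfolding Nodes_def tuples_def by (auto dest: in_set_takeD)
  have ck: "c ! k \<in> {1..J}" using c nth_mem unfolding Nodes_def by blast
  have "take (Suc k) c = take k c @ [c ! k]" using c(2) by (simp add: take_Suc_conv_app_nth)
  moreover have "I (take k c) = (\<Union>j\<in>{1..J}. I (take k c @ [j]))"
    using conjunct1[OF I_split[rule_format, OF kM tk]] .
  ultimately show ?thesis using ck by auto
qed

lemma I_desc: "c \<in> Nodes \<Longrightarrow> k \<le> length c \<Longrightarrow> I c \<subseteq> I (take k c)"
proof -
  assume c: "c \<in> Nodes"
  have "I (take (length c - d) c) \<subseteq> I (take (length c - d - e) c)" for d e
  proof (induction e)
    case 0 then show ?case by simp
  next
    case (Suc e)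
    show ?case
    proof (cases "length c - d - e = 0")
      case True then show ?thesis using Suc by simp
    next
      case False
      then have "I (take (Suc (length c - d - Suc e)) c) \<subseteq> I (take (length c - d - Suc e) c)"
        using I_step[OF c, of "length c - d - Suc e"] by simp
      moreover have "Suc (length c - d - Suc e) = length c - d - e" using False by simp
      ultimately show ?thesis using Suc by simp
    qed
  qed
  from this[of 0 "length c - k"] show "k \<le> length c \<Longrightarrow> I c \<subseteq> I (take k c)" by simp
qed

lemma I_sub_n: "c \<in> Nodes \<Longrightarrow> I c \<subseteq> {..<n}"
  using I_desc[of c 0] I_root by auto

lemma I_disj: "c \<in> tuples J m \<Longrightarrow> c' \<in> tuples J m \<Longrightarrow> m \<le> M \<Longrightarrow> c \<noteq> c' \<Longrightarrow> I c \<inter> I c' = {}"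
proof (induction m arbitrary: c c')
  case 0 then show ?case unfolding tuples_def by simp
next
  case (Suc m)
  obtain a x where c: "c = a @ [x]" using Suc.prems(1) unfolding tuples_def by (cases c rule: rev_exhaust) auto
  obtain b y where c': "c' = b @ [y]" using Suc.prems(2) unfolding tuples_def by (cases c' rule: rev_exhaust) auto
  have a: "a \<in> tuples J m" "x \<in> {1..J}" using Suc.prems(1) c unfolding tuples_def by auto
  have b: "b \<in> tuples J m" "y \<in> {1..J}" using Suc.prems(2) c' unfolding tuples_def by auto
  have mM: "m < M" using Suc.prems(3) by simp
  have "I a = (\<Union>j\<in>{1..J}. I (a @ [j]))" "I b = (\<Union>j\<in>{1..J}. I (b @ [j]))"
    using conjunct1[OF I_split[rule_format, OF mM a(1)]] conjunct1[OF I_split[rule_format, OF mM b(1)]] .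
  then have sub: "I (a @ [x]) \<subseteq> I a" "I (b @ [y]) \<subseteq> I b"
    using a(2) b(2) by blast+
  show ?case
  proof (cases "a = b")
    case True
    then have "x \<noteq> y" using Suc.prems(4) c c' by simp
    then show ?thesis using conjunct2[OF I_split[rule_format, OF mM a(1)]] a(2) b(2) True c c' by blast
  next
    case False
    then have "I a \<inter> I b = {}" using Suc.IH a b Suc.prems(3) by simp
    then show ?thesis using sub c c' by blast
  qed
qed

lemma Nodes_UN: "Nodes = (\<Union>m\<in>{..M}. tuples J m)"
  by (auto simp: Nodes_tuples)

lemma tuples_fin: "finite (tuples J m)"
proof -
  have "tuples J m = {xs. set xs \<subseteq> {1..J} \<and> length xs = m}" unfolding tuples_def by auto
  then show ?thesis using finite_lists_length_eq[of "{1..J}" m] by simp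
qed

lemma card_Nodes: "card Nodes * r = n"
proof -
  have "n = card (\<Union>c\<in>Nodes. K c)"
  proof -
    have "(\<Union>c\<in>Nodes. K c) = (\<Union>m\<le>M. \<Union>js\<in>tuples J m. K js)" unfolding Nodes_UN by auto
    then have "(\<Union>c\<in>Nodes. K c) = {0..<n}" using K_cover by simp
    then show ?thesis by simp
  qed
  also have "\<dots> = (\<Sum>c\<in>Nodes. card (K c))"
  proof (rule card_UN_disjoint[OF Nodes_fin])
    show "\<forall>c\<in>Nodes. finite (K c)" using K_sub_n finite_subset by blast
    show "\<forall>c\<in>Nodes. \<forall>c'\<in>Nodes. c \<noteq> c' \<longrightarrow> K c \<inter> K c' = {}"
    proof (intro ballI impI)
      fix c c' assume "c \<in> Nodes" "c' \<in> Nodes" "c \<noteq> c'"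
      then obtain m m' where "m \<le> M" "c \<in> tuples J m" "m' \<le> M" "c' \<in> tuples J m'" unfolding Nodes_tuples by blast
      then show "K c \<inter> K c' = {}" using K_disj \<open>c \<noteq> c'\<close> by blast
    qed
  qed
  also have "\<dots> = card Nodes * r" using K_card by simp
  finally show ?thesis by simp
qed

lemma sum_I: "(\<Sum>c\<in>Nodes. card (I c)) \<le> (M + 1) * n"
proof -
  have "(\<Sum>c\<in>Nodes. card (I c)) = (\<Sum>m\<in>{..M}. \<Sum>c\<in>tuples J m. card (I c))"
    unfolding Nodes_UN
  proof (rule sum.UNION_disjoint)
    show "\<forall>i\<in>{..M}. \<forall>j\<in>{..M}. i \<noteq> j \<longrightarrow> tuples J i \<inter> tuples J j = {}"
      unfolding tuples_def by auto
  qed (auto simp: tuples_fin)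
  also have "\<dots> \<le> (\<Sum>m\<in>{..M}. n)"
  proof (rule sum_mono)
    fix m assume m: "m \<in> {..M}"
    have "(\<Sum>c\<in>tuples J m. card (I c)) = card (\<Union>c\<in>tuples J m. I c)"
    proof (rule card_UN_disjoint[symmetric, OF tuples_fin])
      show "\<forall>c\<in>tuples J m. finite (I c)"
        using I_sub_n tuples_Nodes m finite_subset by (metis atMost_iff finite_lessThan)
      show "\<forall>c\<in>tuples J m. \<forall>c'\<in>tuples J m. c \<noteq> c' \<longrightarrow> I c \<inter> I c' = {}"
        using I_disj m by auto
    qed
    also have "\<dots> \<le> card {..<n}"
      by (rule card_mono) (use I_sub_n tuples_Nodes m in auto)
    finally show "(\<Sum>c\<in>tuples J m. card (I c)) \<le> n" by simp
  qed
  finally show ?thesis by simp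
qed

end

definition subs :: "'k ex \<Rightarrow> 'k ex list \<Rightarrow> 'k ex" where
  "subs c0 es = foldl (\<lambda>a e. EBin BSub a e) c0 es"
definition adds :: "'k ex \<Rightarrow> 'k ex list \<Rightarrow> 'k ex" where
  "adds c0 es = foldl (\<lambda>a e. EBin BAdd a e) c0 es"

lemma subs_props:
  "evx v S (subs c0 es) = evx v S c0 - sum_list (map (evx v S) es)"
  "refs (subs c0 es) = refs c0 \<union> (\<Union>e\<in>set es. refs e)"
  "dfd v S (subs c0 es) = (dfd v S c0 \<and> (\<forall>e\<in>set es. dfd v S e))"
  "ncode (subs c0 es) = ncode c0 + length es + sum_list (map ncode es)"
  unfolding subs_def by (induction es arbitrary: c0) auto

lemma adds_props:
  "evx v S (adds c0 es) = evx v S c0 + sum_list (map (evx v S) es)"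
  "refs (adds c0 es) = refs c0 \<union> (\<Union>e\<in>set es. refs e)"
  "dfd v S (adds c0 es) = (dfd v S c0 \<and> (\<forall>e\<in>set es. dfd v S e))"
  "ncode (adds c0 es) = ncode c0 + length es + sum_list (map ncode es)"
  unfolding adds_def by (induction es arbitrary: c0) (auto simp: algebra_simps)

lemma sum_list_upt: "sum_list (map f [a..<b]) = (\<Sum>k\<in>{a..<b}. f k)"
  by (simp add: interv_sum_list_conv_sum_set_nat)

lemma sum_list_upt0: "sum_list (map f [0..<b]) = (\<Sum>k<b. f k)"
  by (simp add: interv_sum_list_conv_sum_set_nat atLeast0LessThan)

lemma sum_list_prod: "sum_list (map f (List.product [0..<l] [0..<r])) = (\<Sum>k<l. \<Sum>a<r. f (k, a))"
proof -
  have "sum_list (map f (List.product [0..<l] [0..<r])) = sum f ({..<l} \<times> {..<r})"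
    by (subst sum_list_distinct_conv_sum_set) (auto simp: distinct_product atLeast0LessThan)
  also have "\<dots> = (\<Sum>k<l. \<Sum>a<r. f (k, a))" by (simp add: sum.cartesian_product)
  finally show ?thesis .
qed

datatype key = KW "nat list" nat nat | KY "nat list" nat nat nat | KG "nat list" nat nat | KL "nat list" nat nat
  | KT "nat list" nat nat | KU "nat list" nat nat | KX "nat list" nat nat | KB "nat list" nat nat

definition mul :: "key \<Rightarrow> key \<Rightarrow> key ex" where "mul x y = EBin BMul (ERef x) (ERef y)"

definition dlt :: "nat \<Rightarrow> nat \<Rightarrow> real" where "dlt i j = (if i = j then 1 else 0)"

fun exk :: "(nat list \<Rightarrow> nat set) \<Rightarrow> nat \<Rightarrow> key \<Rightarrow> key ex" where
  "exk K r (KW c i t) = subs (EInp i (knot K c t)) (map (\<lambda>(k, a). mul (KW (take k c) i a) (KY c k a t)) (List.product [0..<length c] [0..<r]))"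
| "exk K r (KY c k a t) = adds (EConst 0) (map (\<lambda>b. mul (KX (take k c) a b) (KW (take k c) (knot K c t) b)) [0..<r])"
| "exk K r (KG d j i) = subs (ERef (KW d (knot K d i) j)) (map (\<lambda>k. EBin BDiv (mul (KG d k i) (KG d k j)) (ERef (KG d k k))) [0..<j])"
| "exk K r (KL d i j) = EBin BDiv (ERef (KG d j i)) (ESqrt (ERef (KG d j j)))"
| "exk K r (KT d i j) = EBin BDiv (subs (EConst (dlt i j)) (map (\<lambda>k. mul (KL d i k) (KT d k j)) [0..<i])) (ERef (KL d i i))"
| "exk K r (KU d i j) = EBin BDiv (subs (EConst (dlt i j)) (map (\<lambda>k. mul (KL d k i) (KU d k j)) [Suc i..<r])) (ERef (KL d i i))"
| "exk K r (KX d a b) = adds (EConst 0) (map (\<lambda>k. mul (KU d a k) (KT d k b)) [0..<r])"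
| "exk K r (KB c i t) = adds (EConst 0) (map (\<lambda>a. mul (KW c i a) (KT c t a)) [0..<r])"

definition Vd :: "(nat \<Rightarrow> nat \<Rightarrow> real) \<Rightarrow> (nat list \<Rightarrow> nat set) \<Rightarrow> nat \<Rightarrow> nat list \<Rightarrow> nat \<Rightarrow> nat \<Rightarrow> real" where
  "Vd S K r c = (\<lambda>x y. mrd_V S K r (length c) c x y)"

fun valk :: "(nat \<Rightarrow> nat \<Rightarrow> real) \<Rightarrow> (nat list \<Rightarrow> nat set) \<Rightarrow> nat \<Rightarrow> key \<Rightarrow> real" where
  "valk S K r (KW c i t) = mrd_W S K r (length c) c i t"
| "valk S K r (KY c k a t) = (\<Sum>b<r. mat_inv r (Vd S K r (take k c)) a b * mrd_V S K r k c t b)"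
| "valk S K r (KG d j i) = Gf (Vd S K r d) j i"
| "valk S K r (KL d i j) = Lf (Vd S K r d) i j"
| "valk S K r (KT d i j) = tsol (Lf (Vd S K r d)) j i"
| "valk S K r (KU d i j) = usol r (Lf (Vd S K r d)) j i"
| "valk S K r (KX d a b) = Xf r (Lf (Vd S K r d)) a b"
| "valk S K r (KB c i t) = mrd_B S K r c i t"

fun rk :: "nat \<Rightarrow> key \<Rightarrow> nat" where
  "rk r (KY c k a t) = (5 + 3 * r) * length c"
| "rk r (KW c i t) = (5 + 3 * r) * length c + 1"
| "rk r (KG d j i) = (5 + 3 * r) * length d + 2 + j"
| "rk r (KL d i j) = (5 + 3 * r) * length d + 2 + r"
| "rk r (KT d i j) = (5 + 3 * r) * length d + 3 + r + i"
| "rk r (KU d i j) = (5 + 3 * r) * length d + 3 + 2 * r + (r - 1 - i)"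
| "rk r (KX d a b) = (5 + 3 * r) * length d + 3 + 3 * r"
| "rk r (KB c i t) = (5 + 3 * r) * length c + 4 + 3 * r"

context mrdS
begin

definition UW where "UW = (\<lambda>(c, i, t). KW c i t) ` (SIGMA c:Nodes. I c \<times> {..<r})"
definition UY where "UY = (\<lambda>(c, k, a, t). KY c k a t) ` (SIGMA c:Nodes. {..<length c} \<times> {..<r} \<times> {..<r})"
definition UG where "UG = (\<lambda>(d, j, i). KG d j i) ` {(d, j, i). d \<in> Nodes \<and> j \<le> i \<and> i < r}"
definition UL where "UL = (\<lambda>(d, i, j). KL d i j) ` {(d, i, j). d \<in> Nodes \<and> j \<le> i \<and> i < r}"
definition UT where "UT = (\<lambda>(d, i, j). KT d i j) ` (Nodes \<times> {..<r} \<times> {..<r})"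
definition UU where "UU = (\<lambda>(d, i, j). KU d i j) ` (Nodes \<times> {..<r} \<times> {..<r})"
definition UX where "UX = (\<lambda>(d, i, j). KX d i j) ` (Nodes \<times> {..<r} \<times> {..<r})"
definition UB where "UB = (\<lambda>(c, i, t). KB c i t) ` (SIGMA c:Nodes. I c \<times> {..<r})"

definition Univ where "Univ = UW \<union> UY \<union> UG \<union> UL \<union> UT \<union> UU \<union> UX \<union> UB"

lemma Univ_simps:
  "KW c i t \<in> Univ \<longleftrightarrow> c \<in> Nodes \<and> i \<in> I c \<and> t < r"
  "KY c k a t \<in> Univ \<longleftrightarrow> c \<in> Nodes \<and> k < length c \<and> a < r \<and> t < r"
  "KG d j i \<in> Univ \<longleftrightarrow> d \<in> Nodes \<and> j \<le> i \<and> i < r"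
  "KL d i j \<in> Univ \<longleftrightarrow> d \<in> Nodes \<and> j \<le> i \<and> i < r"
  "KT d i j \<in> Univ \<longleftrightarrow> d \<in> Nodes \<and> i < r \<and> j < r"
  "KU d i j \<in> Univ \<longleftrightarrow> d \<in> Nodes \<and> i < r \<and> j < r"
  "KX d i j \<in> Univ \<longleftrightarrow> d \<in> Nodes \<and> i < r \<and> j < r"
  "KB c i t \<in> Univ \<longleftrightarrow> c \<in> Nodes \<and> i \<in> I c \<and> t < r"
  unfolding Univ_def UW_def UY_def UG_def UL_def UT_def UU_def UX_def UB_def by (auto simp: image_iff Bex_def)


lemma rk_lt: "k < l \<Longrightarrow> x < 5 + 3 * r \<Longrightarrow> (5 + 3 * r) * k + x < (5 + 3 * (r::nat)) * l"
proof -
  assume a: "k < l" "x < 5 + 3 * r"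
  have "(5 + 3 * r) * Suc k \<le> (5 + 3 * r) * l" using a(1) by (intro mult_le_mono2) simp
  then show ?thesis using a(2) by simp
qed

lemma refs_ok: "k \<in> Univ \<Longrightarrow> refs (exk K r k) \<subseteq> {k' \<in> Univ. rk r k' < rk r k}"
proof (cases k)
  case (KW c i t)
  assume u: "k \<in> Univ"
  then have c: "c \<in> Nodes" "i \<in> I c" "t < r" using KW Univ_simps by auto
  have "KW (take k' c) i a \<in> Univ \<and> rk r (KW (take k' c) i a) < rk r k" if "k' < length c" "a < r" for k' a
    using c that Nodes_take I_desc[OF c(1), of k'] rk_lt[of k' "length c" 1] KW by (auto simp: Univ_simps)
  moreover have "KY c k' a t \<in> Univ \<and> rk r (KY c k' a t) < rk r k" if "k' < length c" "a < r" for k' a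
    using c that KW by (auto simp: Univ_simps)
  ultimately show ?thesis using KW by (auto simp: subs_props mul_def set_product)
next
  case (KY c k' a t)
  assume u: "k \<in> Univ"
  then have c: "c \<in> Nodes" "k' < length c" "a < r" "t < r" using KY Univ_simps by auto
  have kn: "knot K c t \<in> I (take k' c)"
    using knot_in[OF gs c(1) c(4)] K_sub_I[OF c(1)] I_desc[OF c(1), of k'] c(2) by auto
  have "KX (take k' c) a b \<in> Univ \<and> rk r (KX (take k' c) a b) < rk r k" if "b < r" for b
    using c that Nodes_take rk_lt[of k' "length c" "3 + 3 * r"] KY by (auto simp: Univ_simps)
  moreover have "KW (take k' c) (knot K c t) b \<in> Univ \<and> rk r (KW (take k' c) (knot K c t) b) < rk r k" if "b < r" for b
    using c that Nodes_take kn rk_lt[of k' "length c" 1] KY by (auto simp: Univ_simps)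
  ultimately show ?thesis using KY by (auto simp: adds_props mul_def)
next
  case (KG d j i)
  assume u: "k \<in> Univ"
  then have d: "d \<in> Nodes" "j \<le> i" "i < r" using KG Univ_simps by auto
  have kn: "knot K d i \<in> I d" using knot_in[OF gs d(1) d(3)] K_sub_I[OF d(1)] by auto
  show ?thesis using d kn KG by (auto simp: subs_props mul_def Univ_simps)
next
  case (KL d i j)
  then show "k \<in> Univ \<Longrightarrow> ?thesis" by (auto simp: Univ_simps)
next
  case (KT d i j)
  then show "k \<in> Univ \<Longrightarrow> ?thesis" by (auto simp: Univ_simps subs_props mul_def)
next
  case (KU d i j)
  then show "k \<in> Univ \<Longrightarrow> ?thesis" by (auto simp: Univ_simps subs_props mul_def)
next
  case (KX d a b)
  then show "k \<in> Univ \<Longrightarrow> ?thesis" by (auto simp: Univ_simps adds_props mul_def)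
next
  case (KB c i t)
  then show "k \<in> Univ \<Longrightarrow> ?thesis" by (auto simp: Univ_simps adds_props mul_def)
qed


lemma pdV: "posdef n S \<Longrightarrow> d \<in> Nodes \<Longrightarrow> posdef r (Vd S K r d)"
  using gs_main[OF _ gs Hinv_all, of S d "length d"] unfolding Vd_def by blast

lemma val_ok:
  assumes pd: "posdef n S" and u: "k \<in> Univ"
  shows "dfd (valk S K r) S (exk K r k) \<and> evx (valk S K r) S (exk K r k) = valk S K r k"
proof (cases k)
  case (KW c i t)
  then have c: "c \<in> Nodes" "i \<in> I c" "t < r" using u Univ_simps by auto
  have "evx (valk S K r) S (exk K r k) = S i (knot K c t) -
     (\<Sum>k'<length c. \<Sum>a<r. mrd_W S K r k' (take k' c) i a * (\<Sum>b<r. mat_inv r (Vd S K r (take k' c)) a b * mrd_V S K r k' c t b))"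
    using KW by (simp add: subs_props mul_def sum_list_prod case_prod_beta o_def)
  also have "\<dots> = valk S K r k"
  proof -
    have e: "mrd_W S K r (length c) c i t = S i (knot K (take (length c) c) t) - (\<Sum>k'<length c. \<Sum>a<r. \<Sum>b<r.
       mrd_W S K r k' c i a * mat_inv r (\<lambda>x y. mrd_V S K r k' (take k' c) x y) a b * mrd_V S K r k' (take (length c) c) t b)"
      by (rule mrd_W.simps)
    have "(\<Sum>k'<length c. \<Sum>a<r. mrd_W S K r k' (take k' c) i a * (\<Sum>b<r. mat_inv r (Vd S K r (take k' c)) a b * mrd_V S K r k' c t b))
      = (\<Sum>k'<length c. \<Sum>a<r. \<Sum>b<r.
       mrd_W S K r k' c i a * mat_inv r (\<lambda>x y. mrd_V S K r k' (take k' c) x y) a b * mrd_V S K r k' (take (length c) c) t b)"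
    proof (intro sum.cong refl)
      fix k' a assume k': "k' \<in> {..<length c}"
      have "mrd_W S K r k' (take k' c) i a = mrd_W S K r k' c i a" by (rule W_take[symmetric])
      moreover have "Vd S K r (take k' c) = (\<lambda>x y. mrd_V S K r k' (take k' c) x y)" using k' by (simp add: Vd_def min_def)
      ultimately show "mrd_W S K r k' (take k' c) i a * (\<Sum>b<r. mat_inv r (Vd S K r (take k' c)) a b * mrd_V S K r k' c t b) =
         (\<Sum>b<r. mrd_W S K r k' c i a * mat_inv r (\<lambda>x y. mrd_V S K r k' (take k' c) x y) a b * mrd_V S K r k' (take (length c) c) t b)"
        by (simp add: sum_distrib_left mult.assoc)
    qed
    then show ?thesis using e KW by simp
  qed
  finally show ?thesis using KW by (simp add: subs_props mul_def)
next
  case (KY c k' a t)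
  then have c: "c \<in> Nodes" "k' < length c" "a < r" "t < r" using u Univ_simps by auto
  have pd': "posdef r (Vd S K r (take k' c))" by (rule pdV[OF pd Nodes_take[OF c(1)]])
  have "evx (valk S K r) S (exk K r k) = (\<Sum>b<r. Xf r (Lf (Vd S K r (take k' c))) a b * mrd_W S K r k' (take k' c) (knot K c t) b)"
    using KY c(2) by (simp add: adds_props mul_def sum_list_upt0 o_def min_def)
  also have "\<dots> = valk S K r k"
    using KY c by (auto intro!: sum.cong simp: pd_inv[OF pd'] V_W W_take[of S K r k' c "knot K c t"])
  finally show ?thesis using KY by (simp add: adds_props mul_def)
next
  case (KG d j i)
  then have d: "d \<in> Nodes" "j \<le> i" "i < r" using u Univ_simps by auto
  have pd': "posdef r (Vd S K r d)" by (rule pdV[OF pd d(1)])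
  have pos: "Gf (Vd S K r d) k' k' \<noteq> 0" if "k' < j" for k' using pd_Gf[OF pd', of k'] that d by simp
  have "evx (valk S K r) S (exk K r k) = Vd S K r d i j - (\<Sum>k'<j. Gf (Vd S K r d) k' i * Gf (Vd S K r d) k' j / Gf (Vd S K r d) k' k')"
    using KG by (simp add: subs_props mul_def sum_list_upt0 o_def Vd_def V_W)
  also have "\<dots> = valk S K r k"
  proof -
    have "Gf (Vd S K r d) j i = Vd S K r d i j - (\<Sum>k'<j. Gf (Vd S K r d) k' i * Gf (Vd S K r d) k' j / Gf (Vd S K r d) k' k')"
      by (rule Gf.simps)
    then show ?thesis using KG by simp
  qed
  finally show ?thesis using KG pos by (simp add: subs_props mul_def)
next
  case (KL d i j)
  then have d: "d \<in> Nodes" "j \<le> i" "i < r" using u Univ_simps by auto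
  have pd': "posdef r (Vd S K r d)" by (rule pdV[OF pd d(1)])
  have pos: "Gf (Vd S K r d) j j > 0" using pd_Gf[OF pd', of j] d by simp
  show ?thesis using KL pos d by (simp add: Lf_def)
next
  case (KT d i j)
  then have d: "d \<in> Nodes" "i < r" "j < r" using u Univ_simps by auto
  have pd': "posdef r (Vd S K r d)" by (rule pdV[OF pd d(1)])
  have nz: "Lf (Vd S K r d) i i \<noteq> 0" using pd_low[OF pd'] d unfolding lowtri_def by auto
  have "evx (valk S K r) S (exk K r k) = tsol (Lf (Vd S K r d)) j i"
    using KT by (subst tsol.simps) (simp add: subs_props mul_def sum_list_upt0 o_def dlt_def)
  then show ?thesis using KT nz by (simp add: subs_props mul_def)
next
  case (KU d i j)
  then have d: "d \<in> Nodes" "i < r" "j < r" using u Univ_simps by auto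
  have pd': "posdef r (Vd S K r d)" by (rule pdV[OF pd d(1)])
  have nz: "Lf (Vd S K r d) i i \<noteq> 0" using pd_low[OF pd'] d unfolding lowtri_def by auto
  have "evx (valk S K r) S (exk K r k) = usol r (Lf (Vd S K r d)) j i"
    using KU d by (subst usol.simps) (simp add: subs_props mul_def sum_list_upt o_def dlt_def)
  then show ?thesis using KU nz by (simp add: subs_props mul_def)
next
  case (KX d a b)
  then show ?thesis by (simp add: adds_props mul_def sum_list_upt0 o_def Xf_def)
next
  case (KB c i t)
  then have c: "c \<in> Nodes" "i \<in> I c" "t < r" using u Univ_simps by auto
  have pd': "posdef r (Vd S K r c)" by (rule pdV[OF pd c(1)])
  have "evx (valk S K r) S (exk K r k) = (\<Sum>a<r. mrd_W S K r (length c) c i a * tsol (Lf (Vd S K r c)) a t)"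
    using KB by (simp add: adds_props mul_def sum_list_upt0 o_def)
  also have "\<dots> = valk S K r k"
    using KB c pd_inv_chol[OF pd' c(3)]
    by (auto intro!: sum.cong simp: mrd_B_def mat_inv_sqrt_def Vd_def)
  finally show ?thesis using KB by (simp add: adds_props mul_def)
qed


lemma Nodes_len: "c \<in> Nodes \<Longrightarrow> length c \<le> M" unfolding Nodes_def by simp

lemma ncode_mul: "ncode (mul x y) = 1" by (simp add: mul_def)

lemma sum_list_ones: "(\<forall>x\<in>set xs. f x = 1) \<Longrightarrow> sum_list (map f xs) = length xs"
  by (induction xs) auto

lemma sum_list_const: "(\<forall>x\<in>set xs. f x = c) \<Longrightarrow> sum_list (map f xs) = c * length (xs::nat list)"
  by (induction xs) auto

lemma ncode_ok: "k \<in> Univ \<Longrightarrow> ncode (exk K r k) \<le> 3 * ((M + 1) * r) + 3"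
proof (cases k)
  case (KW c i t)
  assume "k \<in> Univ"
  then have c: "c \<in> Nodes" using KW Univ_simps by auto
  have "length c * r \<le> (M + 1) * r" using Nodes_len[OF c] by (intro mult_le_mono1) simp
  then show ?thesis using KW by (simp add: subs_props sum_list_ones ncode_mul o_def case_prod_beta)
next
  case (KY c k' a t)
  then show ?thesis by (simp add: adds_props sum_list_ones ncode_mul o_def)
next
  case (KG d j i)
  assume "k \<in> Univ"
  then have "j < r" using KG Univ_simps by auto
  moreover have "sum_list (map ncode (map (\<lambda>k. EBin BDiv (mul (KG d k i) (KG d k j)) (ERef (KG d k k))) [0..<j])) = 2 * j"
    using sum_list_const[of "[0..<j]" "ncode \<circ> (\<lambda>k. EBin BDiv (mul (KG d k i) (KG d k j)) (ERef (KG d k k)))" 2]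
    by (simp add: ncode_mul)
  ultimately show ?thesis using KG by (simp add: subs_props)
next
  case (KL d i j)
  then show ?thesis by simp
next
  case (KT d i j)
  assume "k \<in> Univ"
  then have "i < r" using KT Univ_simps by auto
  then show ?thesis using KT by (simp add: subs_props sum_list_ones ncode_mul o_def)
next
  case (KU d i j)
  then show ?thesis by (simp add: subs_props sum_list_ones ncode_mul o_def)
next
  case (KX d a b)
  then show ?thesis by (simp add: adds_props sum_list_ones ncode_mul o_def)
next
  case (KB c i t)
  then show ?thesis by (simp add: adds_props sum_list_ones ncode_mul o_def)
qed

lemma rk_bound: "k \<in> Univ \<Longrightarrow> rk r k < (5 + 3 * r) * (M + 1)"
proof (cases k)
  case (KW c i t)
  assume "k \<in> Univ"
  then have "length c < M + 1" using KW Univ_simps Nodes_len by fastforce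
  then show ?thesis using KW rk_lt[of "length c" "M + 1" 1] by simp
next
  case (KY c k' a t)
  assume "k \<in> Univ"
  then have "length c < M + 1" using KY Univ_simps Nodes_len by fastforce
  then show ?thesis using KY rk_lt[of "length c" "M + 1" 0] by simp
next
  case (KG d j i)
  assume "k \<in> Univ"
  then have "length d < M + 1" "j < r" using KG Univ_simps Nodes_len by fastforce+
  then show ?thesis using KG rk_lt[of "length d" "M + 1" "2 + j"] by simp
next
  case (KL d i j)
  assume "k \<in> Univ"
  then have "length d < M + 1" using KL Univ_simps Nodes_len by fastforce
  then show ?thesis using KL rk_lt[of "length d" "M + 1" "2 + r"] by simp
next
  case (KT d i j)
  assume "k \<in> Univ"
  then have "length d < M + 1" "i < r" using KT Univ_simps Nodes_len by fastforce+
  then show ?thesis using KT rk_lt[of "length d" "M + 1" "3 + r + i"] by simp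
next
  case (KU d i j)
  assume "k \<in> Univ"
  then have "length d < M + 1" "i < r" using KU Univ_simps Nodes_len by fastforce+
  moreover have x: "3 + 2 * r + (r - 1 - i) < 5 + 3 * r" by simp
  moreover have "rk r k = (5 + 3 * r) * length d + (3 + 2 * r + (r - 1 - i))" using KU by simp
  ultimately show ?thesis using rk_lt[of "length d" "M + 1" "3 + 2 * r + (r - 1 - i)"] by simp
next
  case (KX d a b)
  assume "k \<in> Univ"
  then have "length d < M + 1" using KX Univ_simps Nodes_len by fastforce
  then show ?thesis using KX rk_lt[of "length d" "M + 1" "3 + 3 * r"] by simp
next
  case (KB c i t)
  assume "k \<in> Univ"
  then have "length c < M + 1" using KB Univ_simps Nodes_len by fastforce
  then show ?thesis using KB rk_lt[of "length c" "M + 1" "4 + 3 * r"] by simp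
qed


lemma I_fin: "c \<in> Nodes \<Longrightarrow> finite (I c)"
  using I_sub_n finite_subset by blast

lemma sig_fin: "finite (SIGMA c:Nodes. I c \<times> {..<r})"
  using Nodes_fin I_fin by (intro finite_SigmaI) auto

lemma card_sig: "card (SIGMA c:Nodes. I c \<times> {..<r}) \<le> (M + 1) * n * r"
proof -
  have "card (SIGMA c:Nodes. I c \<times> {..<r}) = (\<Sum>c\<in>Nodes. card (I c) * r)"
    using Nodes_fin I_fin by (subst card_SigmaI) (auto simp: card_cartesian_product)
  also have "\<dots> = (\<Sum>c\<in>Nodes. card (I c)) * r" by (simp add: sum_distrib_right)
  also have "\<dots> \<le> (M + 1) * n * r" using sum_I by (intro mult_le_mono1) simp
  finally show ?thesis .
qed

lemma NR_fin: "finite (Nodes \<times> {..<r} \<times> {..<r})" using Nodes_fin by simp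

lemma card_NR: "card (Nodes \<times> {..<r} \<times> {..<r}) = n * r"
  using card_Nodes by (simp add: card_cartesian_product)

lemma fin_UY: "finite (SIGMA c:Nodes. {..<length c} \<times> {..<r} \<times> {..<r})"
  using Nodes_fin by (intro finite_SigmaI) auto

lemma card_UYd: "card (SIGMA c:Nodes. {..<length c} \<times> {..<r} \<times> {..<r}) \<le> M * n * r"
proof -
  have "card (SIGMA c:Nodes. {..<length c} \<times> {..<r} \<times> {..<r}) = (\<Sum>c\<in>Nodes. length c * (r * r))"
    using Nodes_fin by (subst card_SigmaI) (auto simp: card_cartesian_product)
  also have "\<dots> \<le> (\<Sum>c\<in>Nodes. M * (r * r))" using Nodes_len by (intro sum_mono mult_le_mono1) auto
  also have "\<dots> = M * (card Nodes * r) * r" by simp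
  also have "\<dots> = M * n * r" using card_Nodes by simp
  finally show ?thesis .
qed

lemma sub_NR1: "{(d, j, i). d \<in> Nodes \<and> j \<le> i \<and> i < r} \<subseteq> Nodes \<times> {..<r} \<times> {..<r}" by auto

lemma Univ_fin: "finite Univ"
proof -
  have "finite {(d, j, i). d \<in> Nodes \<and> j \<le> i \<and> i < r}" by (rule finite_subset[OF sub_NR1 NR_fin])
  moreover have "finite {(d, i, j). d \<in> Nodes \<and> j \<le> i \<and> i < r}"
    by (rule finite_subset[OF _ NR_fin]) auto
  ultimately show ?thesis unfolding Univ_def UW_def UY_def UG_def UL_def UT_def UU_def UX_def UB_def
    using sig_fin fin_UY NR_fin by auto
qed

lemma card_Univ: "card Univ \<le> 8 * ((M + 1) * n * r)"
proof -
  have fG: "finite {(d, j, i). d \<in> Nodes \<and> j \<le> i \<and> i < r}" by (rule finite_subset[OF sub_NR1 NR_fin])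
  have cG: "card {(d, j, i). d \<in> Nodes \<and> j \<le> i \<and> i < r} \<le> n * r"
    using card_mono[OF NR_fin sub_NR1] card_NR by simp
  have W: "card UW \<le> (M + 1) * n * r" unfolding UW_def using card_image_le[OF sig_fin] card_sig le_trans by blast
  have B: "card UB \<le> (M + 1) * n * r" unfolding UB_def using card_image_le[OF sig_fin] card_sig le_trans by blast
  have Y: "card UY \<le> M * n * r" unfolding UY_def using card_image_le[OF fin_UY] card_UYd le_trans by blast
  have G: "card UG \<le> n * r" unfolding UG_def using card_image_le[OF fG] cG le_trans by blast
  have L: "card UL \<le> n * r"
  proof -
    have "{(d, i, j). d \<in> Nodes \<and> j \<le> i \<and> i < r} \<subseteq> Nodes \<times> {..<r} \<times> {..<r}" by auto
    then have "card {(d, i, j). d \<in> Nodes \<and> j \<le> i \<and> i < r} \<le> n * r"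
      using card_mono[OF NR_fin] card_NR by fastforce
    moreover have "finite {(d, i, j). d \<in> Nodes \<and> j \<le> i \<and> i < r}"
      by (rule finite_subset[OF _ NR_fin]) auto
    ultimately show ?thesis unfolding UL_def using card_image_le le_trans by blast
  qed
  have T: "card UT \<le> n * r" unfolding UT_def using card_image_le[OF NR_fin] card_NR by simp
  have U: "card UU \<le> n * r" unfolding UU_def using card_image_le[OF NR_fin] card_NR by simp
  have X: "card UX \<le> n * r" unfolding UX_def using card_image_le[OF NR_fin] card_NR by simp
  have "card Univ \<le> card UW + card UY + card UG + card UL + card UT + card UU + card UX + card UB"
    unfolding Univ_def by (rule order_trans[OF card_Un_le] add_mono order_refl)+
  also have "\<dots> \<le> (M + 1) * n * r + M * n * r + n * r + n * r + n * r + n * r + n * r + (M + 1) * n * r"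
    using W Y G L T U X B by linarith
  also have "\<dots> \<le> 8 * ((M + 1) * n * r)" by (simp add: algebra_simps)
  finally show ?thesis .
qed

end

lemma sum_list_concat_map: "sum_list (map f (concat xss)) = sum_list (map (\<lambda>xs. sum_list (map f xs)) xss)"
  by (induction xss) auto

context mrdS
begin

definition Bk :: "nat \<Rightarrow> key set" where "Bk \<rho> = {k \<in> Univ. rk r k = \<rho>}"
definition blk :: "nat \<Rightarrow> key list" where "blk \<rho> = (SOME xs. set xs = Bk \<rho> \<and> distinct xs)"

lemma blk: "set (blk \<rho>) = Bk \<rho> \<and> distinct (blk \<rho>)"
proof -
  have "finite (Bk \<rho>)" unfolding Bk_def using Univ_fin by simp
  then have "\<exists>xs. set xs = Bk \<rho> \<and> distinct xs" by (rule finite_distinct_list)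
  then show ?thesis unfolding blk_def by (rule someI_ex)
qed

definition RR :: nat where "RR = (5 + 3 * r) * (M + 1)"

definition stF :: "nat \<Rightarrow> instr list \<times> (key \<Rightarrow> nat)" where
  "stF \<rho> = foldl (emit (exk K r)) ([], \<lambda>_. 0) (concat (map blk [0..<\<rho>]))"

lemma stF_Suc: "stF (Suc \<rho>) = foldl (emit (exk K r)) (stF \<rho>) (blk \<rho>)"
  unfolding stF_def by simp

lemma stF_Inv: "posdef n S \<Longrightarrow> Inv (valk S K r) S {k \<in> Univ. rk r k < \<rho>} (stF \<rho>)"
proof (induction \<rho>)
  case 0
  then show ?case by (simp add: stF_def Inv_def prog_ok_Nil)
next
  case (Suc \<rho>)
  have "Inv (valk S K r) S ({k \<in> Univ. rk r k < \<rho>} \<union> set (blk \<rho>)) (foldl (emit (exk K r)) (stF \<rho>) (blk \<rho>))"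
  proof (rule fold_Inv[OF Suc.IH[OF Suc.prems]], intro ballI conjI)
    fix k assume "k \<in> set (blk \<rho>)"
    then have k: "k \<in> Univ" "rk r k = \<rho>" using blk unfolding Bk_def by auto
    show "refs (exk K r k) \<subseteq> {k \<in> Univ. rk r k < \<rho>}" using refs_ok[OF k(1)] k(2) by simp
    show "dfd (valk S K r) S (exk K r k)" using val_ok[OF Suc.prems k(1)] by simp
    show "evx (valk S K r) S (exk K r k) = valk S K r k" using val_ok[OF Suc.prems k(1)] by simp
  qed
  moreover have "{k \<in> Univ. rk r k < \<rho>} \<union> set (blk \<rho>) = {k \<in> Univ. rk r k < Suc \<rho>}"
    using blk unfolding Bk_def by auto
  ultimately show ?case by (simp add: stF_Suc)
qed

definition Pg :: "instr list" where "Pg = fst (stF RR)"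
definition outg :: "nat list \<Rightarrow> nat \<Rightarrow> nat \<Rightarrow> nat" where "outg js i t = snd (stF RR) (KB js i t)"

lemma Pg_Inv: "posdef n S \<Longrightarrow> Inv (valk S K r) S Univ (stF RR)"
proof -
  assume pd: "posdef n S"
  have "{k \<in> Univ. rk r k < RR} = Univ" using rk_bound unfolding RR_def by auto
  then show ?thesis using stF_Inv[OF pd, of RR] by simp
qed

lemma Pg_len: "length Pg \<le> card Univ * (3 * ((M + 1) * r) + 3)"
proof -
  let ?f = "\<lambda>k. ncode (exk K r k)"
  let ?mx = "3 * ((M + 1) * r) + 3"
  have "length Pg = sum_list (map ?f (concat (map blk [0..<RR])))"
    unfolding Pg_def stF_def using length_fold[of "exk K r" "([], \<lambda>_. 0)"] by simp
  also have "\<dots> = (\<Sum>\<rho><RR. sum_list (map ?f (blk \<rho>)))"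
    by (simp add: sum_list_concat_map sum_list_upt0 o_def)
  also have "\<dots> = (\<Sum>\<rho><RR. sum ?f (Bk \<rho>))"
    using blk by (simp add: sum_list_distinct_conv_sum_set)
  also have "\<dots> \<le> (\<Sum>\<rho><RR. card (Bk \<rho>) * ?mx)"
  proof (rule sum_mono)
    fix \<rho> show "sum ?f (Bk \<rho>) \<le> card (Bk \<rho>) * ?mx"
      using sum_bounded_above[of "Bk \<rho>" ?f ?mx] ncode_ok unfolding Bk_def by auto
  qed
  also have "\<dots> = (\<Sum>\<rho><RR. card (Bk \<rho>)) * ?mx" by (simp add: sum_distrib_right)
  also have "(\<Sum>\<rho><RR. card (Bk \<rho>)) = card (\<Union>\<rho><RR. Bk \<rho>)"
    by (rule card_UN_disjoint[symmetric]) (use Univ_fin in \<open>auto simp: Bk_def\<close>)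
  also have "card (\<Union>\<rho><RR. Bk \<rho>) \<le> card Univ"
    by (rule card_mono[OF Univ_fin]) (auto simp: Bk_def)
  finally show ?thesis by (simp add: mult_le_mono1)
qed

lemma Pg_bound: "length Pg \<le> 48 * n * ((M + 1) * r)\<^sup>2"
proof (cases "r = 0")
  case True
  then have "card Univ = 0" using card_Univ by simp
  then show ?thesis using Pg_len by simp
next
  case False
  let ?q = "(M + 1) * r"
  have q: "1 \<le> ?q" using False by simp
  have "length Pg \<le> card Univ * (3 * ?q + 3)" by (rule Pg_len)
  also have "\<dots> \<le> 8 * ((M + 1) * n * r) * (3 * ?q + 3)" by (rule mult_le_mono1[OF card_Univ])
  also have "8 * ((M + 1) * n * r) = 8 * (?q * n)" by (simp add: algebra_simps)
  also have "8 * (?q * n) * (3 * ?q + 3) \<le> 8 * (?q * n) * (6 * ?q)" using q by (intro mult_le_mono2) simp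
  also have "\<dots> = 48 * n * ?q\<^sup>2" by (simp add: power2_eq_square algebra_simps)
  finally show ?thesis .
qed

end

theorem proposition5:
  shows "\<exists>C::nat. \<forall>n J M r I K. mrd_structure n J M r I K \<longrightarrow>
     (\<exists>(P::instr list) (out::nat list \<Rightarrow> nat \<Rightarrow> nat \<Rightarrow> nat).
        length P \<le> C * n * ((M + 1) * r)\<^sup>2 \<and>
        (\<forall>S. posdef n S \<longrightarrow>
           prog_ok P S \<and>
           (\<forall>m\<le>M. \<forall>js\<in>tuples J m. \<forall>i\<in>I js. \<forall>t<r.
              out js i t < length P \<and> eval_prog P S ! out js i t = mrd_B S K r js i t)))"
proof (rule exI[of _ 48], intro allI impI)
  fix n J M r I K assume st: "mrd_structure n J M r I K"
  interpret mrdS n J M r I K by (rule mrdS.intro[OF st])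
  show "\<exists>(P::instr list) (out::nat list \<Rightarrow> nat \<Rightarrow> nat \<Rightarrow> nat).
        length P \<le> 48 * n * ((M + 1) * r)\<^sup>2 \<and>
        (\<forall>S. posdef n S \<longrightarrow>
           prog_ok P S \<and>
           (\<forall>m\<le>M. \<forall>js\<in>tuples J m. \<forall>i\<in>I js. \<forall>t<r.
              out js i t < length P \<and> eval_prog P S ! out js i t = mrd_B S K r js i t))"
  proof (rule exI[of _ Pg], rule exI[of _ outg], intro conjI allI impI ballI)
    show "length Pg \<le> 48 * n * ((M + 1) * r)\<^sup>2" by (rule Pg_bound)
  next
    fix S assume pd: "posdef n S"
    show "prog_ok Pg S" using Pg_Inv[OF pd] unfolding Inv_def Pg_def by simp
  next
    fix S m js i t assume pd: "posdef n S" and m: "m \<le> M" and js: "js \<in> tuples J m" and i: "i \<in> I js" and t: "t < r"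
    have "KB js i t \<in> Univ" using tuples_Nodes[OF m js] i t by (simp add: Univ_simps)
    then show "outg js i t < length Pg" "eval_prog Pg S ! outg js i t = mrd_B S K r js i t"
      using Pg_Inv[OF pd] unfolding Inv_def Pg_def outg_def by auto
  qed
qed

end
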